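(* Let $X$ be a compact Hausdorff space, $\varphi:X\to X$ a continuous surjection, and $(\tilde X,\tilde\varphi)$ its minimal homeomorphism extension with extension map $p:\tilde X\to X$. Let $F\in C(X)\rtimes_\varphi\mathbb{Z}^+$ and $\tilde x\in\tilde X$. Then $$\|\Pi_{\tilde x}(\tilde F)\|=\sup\{\|\pi_y(F)\| : y=p(\tilde y)\text{ for some }\tilde y\in\mathrm{Orbit}(\tilde x)\},$$ where $\mathrm{Orbit}(\tilde x)=\{\tilde\varphi^n(\tilde x):n\in\mathbb{Z}\}$.
   Context: Minimal homeomorphism extension: $\tilde X=\{(x_1,x_2,\dots)\in\prod_{n\ge1}X : x_n=\varphi(x_{n+1})\ \forall n\}$, $\tilde\varphi(x_1,x_2,\dots)=(\varphi(x_1),x_1,x_2,\dots)$ (a homeomorphism), $p(x_1,x_2,\dots)=x_1$, so $p\circ\tilde\varphi=\varphi\circ p$. Semicrossed product: let $\mathcal{A}_0$ be the algebra generated by $C(X)$ and $U$ subject to $fU=U(f\circ\varphi)$, elements $\sum_{n=0}^NU^nf_n$; $C(X)\rtimes_\varphi\mathbb{Z}^+$ is its completion in the norm $\sup_\pi\|\pi(F)\|$ over homomorphisms that are $*$-representations on $C(X)$ with $\pi(U)$ an isometry. Similarly for $C(\tilde X)\rtimes_{\tilde\varphi}\mathbb{Z}^+$ with generator $\tilde U$. For $F=\sum U^nf_n$ put $\tilde F=\sum\tilde U^n(f_n\circ p)$, extended by continuity to $C(X)\rtimes_\varphi\mathbb{Z}^+$. For $y\in X$, $\pi_y$ acts on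 $\ell^2(\mathbb{N})$ by $\pi_y(f)(z_1,z_2,\dots)=(f(y)z_1,f(\varphi(y))z_2,f(\varphi^2(y))z_3,\dots)$ and $\pi_y(U)(z_1,z_2,\dots)=(0,z_1,z_2,\dots)$. For $\tilde x\in\tilde X$, $\Pi_{\tilde x}$ acts on $\ell^2(\mathbb{Z})$ by $(\Pi_{\tilde x}(\tilde U)\xi)_n=\xi_{n-1}$ and $(\Pi_{\tilde x}(g)\xi)_n=g(\tilde\varphi^n(\tilde x))\xi_n$ for $g\in C(\tilde X)$. *)

theory Defs
  imports "HOL-Analysis.Analysis"
begin

definition l2 :: "('i \<Rightarrow> complex) set" where
  "l2 = {\<xi>. (\<lambda>i. (cmod (\<xi> i))^2) summable_on UNIV}"

definition l2norm :: "('i \<Rightarrow> complex) \<Rightarrow> real" where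
  "l2norm \<xi> = sqrt (\<Sum>\<^sub>\<infinity>i. (cmod (\<xi> i))^2)"

definition l2inner :: "('i \<Rightarrow> complex) \<Rightarrow> ('i \<Rightarrow> complex) \<Rightarrow> complex" where
  "l2inner \<xi> \<eta> = (\<Sum>\<^sub>\<infinity>i. \<xi> i * cnj (\<eta> i))"

definition opnorm :: "(('i \<Rightarrow> complex) \<Rightarrow> ('i \<Rightarrow> complex)) \<Rightarrow> real" where
  "opnorm T = Sup {l2norm (T \<xi>) | \<xi>. \<xi> \<in> l2 \<and> l2norm \<xi> \<le> 1}"

definition bounded_op :: "(('i \<Rightarrow> complex) \<Rightarrow> ('i \<Rightarrow> complex)) \<Rightarrow> bool" where
  "bounded_op T \<longleftrightarrow>
     (\<forall>\<xi>\<in>l2. T \<xi> \<in> l2) \<and>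
     (\<forall>\<xi>\<in>l2. \<forall>\<eta>\<in>l2. T (\<lambda>i. \<xi> i + \<eta> i) = (\<lambda>i. T \<xi> i + T \<eta> i)) \<and>
     (\<forall>c. \<forall>\<xi>\<in>l2. T (\<lambda>i. c * \<xi> i) = (\<lambda>i. c * T \<xi> i)) \<and>
     (\<exists>C. \<forall>\<xi>\<in>l2. l2norm (T \<xi>) \<le> C * l2norm \<xi>)"

definition star_rep ::
  "(('a::topological_space \<Rightarrow> complex) \<Rightarrow> ('i \<Rightarrow> complex) \<Rightarrow> ('i \<Rightarrow> complex)) \<Rightarrow> bool" where
  "star_rep \<rho> \<longleftrightarrow>
     (\<forall>f. continuous_on UNIV f \<longrightarrow> bounded_op (\<rho> f)) \<and>
     (\<forall>f g. continuous_on UNIV f \<longrightarrow> continuous_on UNIV g \<longrightarrow>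
        (\<forall>\<xi>\<in>l2. \<rho> (\<lambda>x. f x + g x) \<xi> = (\<lambda>i. \<rho> f \<xi> i + \<rho> g \<xi> i)
               \<and> \<rho> (\<lambda>x. f x * g x) \<xi> = \<rho> f (\<rho> g \<xi>))) \<and>
     (\<forall>c f. continuous_on UNIV f \<longrightarrow>
        (\<forall>\<xi>\<in>l2. \<rho> (\<lambda>x. c * f x) \<xi> = (\<lambda>i. c * \<rho> f \<xi> i))) \<and>
     (\<forall>f. continuous_on UNIV f \<longrightarrow>
        (\<forall>\<xi>\<in>l2. \<forall>\<eta>\<in>l2. l2inner (\<rho> f \<xi>) \<eta> = l2inner \<xi> (\<rho> (\<lambda>x. cnj (f x)) \<eta>)))"

text \<open>A homomorphism of the algebra A0 generated by C(X) and U with f U = U (f o phi),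
  which is a *-representation on C(X) and maps U to an isometry V.\<close>
definition cov_rep ::
  "('a::topological_space \<Rightarrow> 'a) \<Rightarrow> (('a \<Rightarrow> complex) \<Rightarrow> ('i \<Rightarrow> complex) \<Rightarrow> ('i \<Rightarrow> complex))
     \<Rightarrow> (('i \<Rightarrow> complex) \<Rightarrow> ('i \<Rightarrow> complex)) \<Rightarrow> bool" where
  "cov_rep \<phi> \<rho> V \<longleftrightarrow> star_rep \<rho> \<and> bounded_op V \<and> (\<forall>\<xi>\<in>l2. l2norm (V \<xi>) = l2norm \<xi>) \<and>
     (\<forall>f. continuous_on UNIV f \<longrightarrow> (\<forall>\<xi>\<in>l2. \<rho> f (V \<xi>) = V (\<rho> (f \<circ> \<phi>) \<xi>)))"

text \<open>Elements of A0: F = sum_n U^n f_n, coded by the coefficient sequence n |-> f_n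
  (finitely supported, continuous coefficients).\<close>
definition poly_elems :: "(nat \<Rightarrow> 'a::topological_space \<Rightarrow> complex) set" where
  "poly_elems = {F. finite {n. \<exists>x. F n x \<noteq> 0} \<and> (\<forall>n. continuous_on UNIV (F n))}"

definition rep ::
  "(('x \<Rightarrow> complex) \<Rightarrow> ('i \<Rightarrow> complex) \<Rightarrow> ('i \<Rightarrow> complex))
     \<Rightarrow> (('i \<Rightarrow> complex) \<Rightarrow> ('i \<Rightarrow> complex)) \<Rightarrow> (nat \<Rightarrow> 'x \<Rightarrow> complex)
     \<Rightarrow> ('i \<Rightarrow> complex) \<Rightarrow> ('i \<Rightarrow> complex)" where
  "rep \<rho> V F \<xi> = (\<lambda>i. \<Sum>n\<in>{n. \<exists>x. F n x \<noteq> 0}. (V ^^ n) (\<rho> (F n) \<xi>) i)"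

text \<open>Hilbert spaces are taken to be l2(I) with I of the type nat => 'a => complex, which is
  large enough to contain (a copy of) every cyclic subspace.\<close>
definition univ_norm :: "('a::topological_space \<Rightarrow> 'a) \<Rightarrow> (nat \<Rightarrow> 'a \<Rightarrow> complex) \<Rightarrow> real" where
  "univ_norm \<phi> F = Sup {opnorm (rep \<rho> V F) | 
      (\<rho> :: ('a \<Rightarrow> complex) \<Rightarrow> ((nat \<Rightarrow> 'a \<Rightarrow> complex) \<Rightarrow> complex) \<Rightarrow> ((nat \<Rightarrow> 'a \<Rightarrow> complex) \<Rightarrow> complex))
      V. cov_rep \<phi> \<rho> V}"

section \<open>Minimal homeomorphism extension (sequences indexed from 0: x 0 = x_1)\<close>

definition Xt :: "('a \<Rightarrow> 'a) \<Rightarrow> (nat \<Rightarrow> 'a) set" where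
  "Xt \<phi> = {x. \<forall>n. x n = \<phi> (x (Suc n))}"

definition tphi :: "('a \<Rightarrow> 'a) \<Rightarrow> (nat \<Rightarrow> 'a) \<Rightarrow> (nat \<Rightarrow> 'a)" where
  "tphi \<phi> x = (\<lambda>n. case n of 0 \<Rightarrow> \<phi> (x 0) | Suc m \<Rightarrow> x m)"

text \<open>The inverse of tphi on Xt: (x_1, x_2, ...) |-> (x_2, x_3, ...).\<close>
definition tshift :: "(nat \<Rightarrow> 'a) \<Rightarrow> (nat \<Rightarrow> 'a)" where
  "tshift x = (\<lambda>n. x (Suc n))"

definition tphi_pow :: "('a \<Rightarrow> 'a) \<Rightarrow> int \<Rightarrow> (nat \<Rightarrow> 'a) \<Rightarrow> (nat \<Rightarrow> 'a)" where
  "tphi_pow \<phi> n x = (if 0 \<le> n then (tphi \<phi> ^^ nat n) x else (tshift ^^ nat (- n)) x)"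

definition orbit :: "('a \<Rightarrow> 'a) \<Rightarrow> (nat \<Rightarrow> 'a) \<Rightarrow> (nat \<Rightarrow> 'a) set" where
  "orbit \<phi> x = range (\<lambda>n::int. tphi_pow \<phi> n x)"

definition pext :: "(nat \<Rightarrow> 'a) \<Rightarrow> 'a" where
  "pext x = x 0"

definition tilde :: "(nat \<Rightarrow> 'a \<Rightarrow> complex) \<Rightarrow> (nat \<Rightarrow> (nat \<Rightarrow> 'a) \<Rightarrow> complex)" where
  "tilde F = (\<lambda>n. F n \<circ> pext)"

definition pi_y :: "('a \<Rightarrow> 'a) \<Rightarrow> 'a \<Rightarrow> (nat \<Rightarrow> 'a \<Rightarrow> complex) \<Rightarrow> (nat \<Rightarrow> complex) \<Rightarrow> (nat \<Rightarrow> complex)" where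
  "pi_y \<phi> y F = rep (\<lambda>f z k. f ((\<phi> ^^ k) y) * z k) (\<lambda>z k. if k = 0 then 0 else z (k - 1)) F"

definition Pi_x :: "('a \<Rightarrow> 'a) \<Rightarrow> (nat \<Rightarrow> 'a) \<Rightarrow> (nat \<Rightarrow> (nat \<Rightarrow> 'a) \<Rightarrow> complex)
     \<Rightarrow> (int \<Rightarrow> complex) \<Rightarrow> (int \<Rightarrow> complex)" where
  "Pi_x \<phi> xt G = rep (\<lambda>g \<xi> n. g (tphi_pow \<phi> n xt) * \<xi> n) (\<lambda>\<xi> n. \<xi> (n - 1)) G"

end

theory Submission
  imports Defs
begin

lemma sq_nonneg_sum: "0 \<le> infsum (\<lambda>i. (cmod (\<xi> i))^2) A"
  by (intro infsum_nonneg) simp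

lemma l2norm_nonneg: "0 \<le> l2norm \<xi>"
  by (simp add: l2norm_def sq_nonneg_sum)

lemma l2norm_sq: "(l2norm \<xi>)^2 = infsum (\<lambda>i. (cmod (\<xi> i))^2) UNIV"
  by (simp add: l2norm_def sq_nonneg_sum)

lemma l2_zero: "(\<lambda>i. 0) \<in> l2" "l2norm (\<lambda>i. 0) = 0"
  by (simp_all add: l2_def l2norm_def)

lemma l2_mono:
  assumes "\<eta> \<in> l2" "\<And>i. cmod (\<xi> i) \<le> cmod (\<eta> i)"
  shows "\<xi> \<in> l2" "l2norm \<xi> \<le> l2norm \<eta>"
proof -
  have s: "(\<lambda>i. (cmod (\<eta> i))^2) summable_on UNIV" using assms(1) by (simp add: l2_def)
  have le: "\<And>i. (cmod (\<xi> i))^2 \<le> (cmod (\<eta> i))^2"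
    using assms(2) by (simp add: power_mono)
  have s2: "(\<lambda>i. (cmod (\<xi> i))^2) summable_on UNIV"
    by (rule summable_on_comparison_test[OF s]) (use le in auto)
  then show "\<xi> \<in> l2" by (simp add: l2_def)
  show "l2norm \<xi> \<le> l2norm \<eta>"
    unfolding l2norm_def by (rule real_sqrt_le_mono, rule infsum_mono[OF s2 s]) (use le in auto)
qed

lemma l2_mult_bounded:
  assumes "\<xi> \<in> l2" "\<And>i. cmod (b i) \<le> B"
  shows "(\<lambda>i. b i * \<xi> i) \<in> l2" "l2norm (\<lambda>i. b i * \<xi> i) \<le> B * l2norm \<xi>"
proof -
  have B0: "0 \<le> B" using assms(2)[of undefined] norm_ge_zero order_trans by blast
  have s: "(\<lambda>i. (cmod (\<xi> i))^2) summable_on UNIV" using assms(1) by (simp add: l2_def)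
  have s1: "(\<lambda>i. B^2 * (cmod (\<xi> i))^2) summable_on UNIV"
    by (rule summable_on_cmult_right[OF s])
  have le: "\<And>i. (cmod (b i * \<xi> i))^2 \<le> B^2 * (cmod (\<xi> i))^2"
  proof -
    fix i
    have "cmod (b i * \<xi> i) \<le> B * cmod (\<xi> i)"
      by (simp add: norm_mult mult_right_mono assms(2))
    then have "(cmod (b i * \<xi> i))^2 \<le> (B * cmod (\<xi> i))^2" by (simp add: power_mono)
    then show "(cmod (b i * \<xi> i))^2 \<le> B^2 * (cmod (\<xi> i))^2" by (simp add: power_mult_distrib)
  qed
  have s2: "(\<lambda>i. (cmod (b i * \<xi> i))^2) summable_on UNIV"
    by (rule summable_on_comparison_test[OF s1]) (use le in auto)
  then show "(\<lambda>i. b i * \<xi> i) \<in> l2" by (simp add: l2_def)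
  have "infsum (\<lambda>i. (cmod (b i * \<xi> i))^2) UNIV \<le> infsum (\<lambda>i. B^2 * (cmod (\<xi> i))^2) UNIV"
    by (rule infsum_mono[OF s2 s1]) (use le in auto)
  also have "\<dots> = B^2 * infsum (\<lambda>i. (cmod (\<xi> i))^2) UNIV"
    by (rule infsum_cmult_right) (use s in auto)
  finally have "sqrt (infsum (\<lambda>i. (cmod (b i * \<xi> i))^2) UNIV) \<le> sqrt (B^2 * infsum (\<lambda>i. (cmod (\<xi> i))^2) UNIV)"
    by (rule real_sqrt_le_mono)
  also have "\<dots> = B * l2norm \<xi>" using B0 by (simp add: l2norm_def real_sqrt_mult)
  finally show "l2norm (\<lambda>i. b i * \<xi> i) \<le> B * l2norm \<xi>" by (simp add: l2norm_def)
qed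

lemma l2_zero_iff:
  assumes "\<xi> \<in> l2" "l2norm \<xi> = 0"
  shows "\<xi> i = 0"
proof -
  have s: "(\<lambda>i. (cmod (\<xi> i))^2) summable_on UNIV" using assms(1) by (simp add: l2_def)
  have "infsum (\<lambda>i. (cmod (\<xi> i))^2) UNIV = 0" using assms(2) l2norm_sq[of \<xi>] by simp
  then have "(cmod (\<xi> i))^2 = 0"
    by (intro nonneg_infsum_le_0D[OF _ s]) auto
  then show ?thesis by simp
qed

lemma l2_CS_real:
  assumes "\<xi> \<in> l2" "\<eta> \<in> l2"
  shows "(\<lambda>i. cmod (\<xi> i) * cmod (\<eta> i)) summable_on UNIV"
    "infsum (\<lambda>i. cmod (\<xi> i) * cmod (\<eta> i)) UNIV \<le> l2norm \<xi> * l2norm \<eta>"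
proof -
  have s1: "(\<lambda>i. (cmod (\<xi> i))^2) summable_on UNIV" using assms(1) by (simp add: l2_def)
  have s2: "(\<lambda>i. (cmod (\<eta> i))^2) summable_on UNIV" using assms(2) by (simp add: l2_def)
  have le: "\<And>i. cmod (\<xi> i) * cmod (\<eta> i) \<le> (cmod (\<xi> i))^2 + (cmod (\<eta> i))^2"
    by (smt (verit, best) norm_ge_zero power2_eq_square mult_right_mono mult_left_mono sum_squares_bound)
  show s: "(\<lambda>i. cmod (\<xi> i) * cmod (\<eta> i)) summable_on UNIV"
    by (rule summable_on_comparison_test[OF summable_on_add[OF s1 s2]]) (use le in auto)
  define \<alpha> where "\<alpha> = l2norm \<xi>"
  define \<beta> where "\<beta> = l2norm \<eta>"
  have a0: "\<alpha> \<ge> 0" "\<beta> \<ge> 0" by (simp_all add: \<alpha>_def \<beta>_def l2norm_nonneg)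
  show "infsum (\<lambda>i. cmod (\<xi> i) * cmod (\<eta> i)) UNIV \<le> l2norm \<xi> * l2norm \<eta>"
  proof (cases "\<alpha> = 0 \<or> \<beta> = 0")
    case True
    then have "(\<lambda>i. cmod (\<xi> i) * cmod (\<eta> i)) = (\<lambda>i. 0)"
      using l2_zero_iff[OF assms(1)] l2_zero_iff[OF assms(2)] \<alpha>_def \<beta>_def by auto
    then show ?thesis using a0 by (simp add: \<alpha>_def \<beta>_def)
  next
    case False
    then have ap: "\<alpha> > 0" "\<beta> > 0" using a0 by auto
    define t where "t = \<beta> / \<alpha>"
    have tp: "t > 0" using ap by (simp add: t_def)
    have le2: "\<And>i. cmod (\<xi> i) * cmod (\<eta> i) \<le> (t * (cmod (\<xi> i))^2 + (1/t) * (cmod (\<eta> i))^2) / 2"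
    proof -
      fix i
      have "0 \<le> (t * cmod (\<xi> i) - cmod (\<eta> i))^2 / t" using tp by simp
      then show "cmod (\<xi> i) * cmod (\<eta> i) \<le> (t * (cmod (\<xi> i))^2 + (1/t) * (cmod (\<eta> i))^2) / 2"
        using tp by (simp add: power2_eq_square field_simps)
    qed
    have sr: "(\<lambda>i. (t * (cmod (\<xi> i))^2 + (1/t) * (cmod (\<eta> i))^2) / 2) summable_on UNIV"
      using summable_on_cmult_right[OF summable_on_add[OF summable_on_cmult_right[OF s1, of t] summable_on_cmult_right[OF s2, of "1/t"]], of "1/2"]
      by simp
    have "infsum (\<lambda>i. cmod (\<xi> i) * cmod (\<eta> i)) UNIV \<le> infsum (\<lambda>i. (t * (cmod (\<xi> i))^2 + (1/t) * (cmod (\<eta> i))^2) / 2) UNIV"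
      by (rule infsum_mono[OF s sr]) (use le2 in auto)
    also have "\<dots> = (t * \<alpha>^2 + (1/t) * \<beta>^2) / 2"
    proof -
      have "infsum (\<lambda>i. (t * (cmod (\<xi> i))^2 + (1/t) * (cmod (\<eta> i))^2) / 2) UNIV
          = infsum (\<lambda>i. (1/2) * ((t * (cmod (\<xi> i))^2 + (1/t) * (cmod (\<eta> i))^2))) UNIV" by simp
      also have "\<dots> = (1/2) * infsum (\<lambda>i. (t * (cmod (\<xi> i))^2 + (1/t) * (cmod (\<eta> i))^2)) UNIV"
        by (rule infsum_cmult_right) (use summable_on_add[OF summable_on_cmult_right[OF s1, of t] summable_on_cmult_right[OF s2, of "1/t"]] in auto)
      also have "infsum (\<lambda>i. (t * (cmod (\<xi> i))^2 + (1/t) * (cmod (\<eta> i))^2)) UNIV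
          = t * infsum (\<lambda>i. (cmod (\<xi> i))^2) UNIV + (1/t) * infsum (\<lambda>i. (cmod (\<eta> i))^2) UNIV"
        using infsum_add[OF summable_on_cmult_right[OF s1, of t] summable_on_cmult_right[OF s2, of "1/t"]]
          infsum_cmult_right[OF s1, of t] infsum_cmult_right[OF s2, of "1/t"] by simp
      finally show ?thesis using l2norm_sq[of \<xi>] l2norm_sq[of \<eta>] by (simp add: \<alpha>_def \<beta>_def)
    qed
    also have "\<dots> = \<alpha> * \<beta>" using ap by (simp add: t_def power2_eq_square field_simps)
    finally show ?thesis by (simp add: \<alpha>_def \<beta>_def)
  qed
qed

lemma l2_add:
  assumes "\<xi> \<in> l2" "\<eta> \<in> l2"
  shows "(\<lambda>i. \<xi> i + \<eta> i) \<in> l2" "l2norm (\<lambda>i. \<xi> i + \<eta> i) \<le> l2norm \<xi> + l2norm \<eta>"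
proof -
  have s1: "(\<lambda>i. (cmod (\<xi> i))^2) summable_on UNIV" using assms(1) by (simp add: l2_def)
  have s2: "(\<lambda>i. (cmod (\<eta> i))^2) summable_on UNIV" using assms(2) by (simp add: l2_def)
  note s3 = l2_CS_real(1)[OF assms]
  have sr: "(\<lambda>i. (cmod (\<xi> i))^2 + 2 * (cmod (\<xi> i) * cmod (\<eta> i)) + (cmod (\<eta> i))^2) summable_on UNIV"
    by (intro summable_on_add summable_on_cmult_right s1 s2 s3)
  have le: "\<And>i. (cmod (\<xi> i + \<eta> i))^2 \<le> (cmod (\<xi> i))^2 + 2 * (cmod (\<xi> i) * cmod (\<eta> i)) + (cmod (\<eta> i))^2"
  proof -
    fix i
    have "(cmod (\<xi> i + \<eta> i))^2 \<le> (cmod (\<xi> i) + cmod (\<eta> i))^2"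
      by (simp add: power_mono norm_triangle_ineq)
    then show "?thesis i" by (simp add: power2_sum)
  qed
  have s: "(\<lambda>i. (cmod (\<xi> i + \<eta> i))^2) summable_on UNIV"
    by (rule summable_on_comparison_test[OF sr]) (use le in auto)
  then show "(\<lambda>i. \<xi> i + \<eta> i) \<in> l2" by (simp add: l2_def)
  have "infsum (\<lambda>i. (cmod (\<xi> i + \<eta> i))^2) UNIV
      \<le> infsum (\<lambda>i. (cmod (\<xi> i))^2 + 2 * (cmod (\<xi> i) * cmod (\<eta> i)) + (cmod (\<eta> i))^2) UNIV"
    by (rule infsum_mono[OF s sr]) (use le in auto)
  also have "\<dots> = infsum (\<lambda>i. (cmod (\<xi> i))^2) UNIV + 2 * infsum (\<lambda>i. cmod (\<xi> i) * cmod (\<eta> i)) UNIV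
        + infsum (\<lambda>i. (cmod (\<eta> i))^2) UNIV"
    using infsum_add[OF summable_on_add[OF s1 summable_on_cmult_right[OF s3, of 2]] s2]
      infsum_add[OF s1 summable_on_cmult_right[OF s3, of 2]] infsum_cmult_right[OF s3, of 2] by simp
  also have "\<dots> \<le> (l2norm \<xi>)^2 + 2 * (l2norm \<xi> * l2norm \<eta>) + (l2norm \<eta>)^2"
    using l2_CS_real(2)[OF assms] l2norm_sq[of \<xi>] l2norm_sq[of \<eta>] by simp
  also have "\<dots> = (l2norm \<xi> + l2norm \<eta>)^2" by (simp add: power2_sum)
  finally have "sqrt (infsum (\<lambda>i. (cmod (\<xi> i + \<eta> i))^2) UNIV) \<le> sqrt ((l2norm \<xi> + l2norm \<eta>)^2)"
    by (rule real_sqrt_le_mono)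
  then show "l2norm (\<lambda>i. \<xi> i + \<eta> i) \<le> l2norm \<xi> + l2norm \<eta>"
    using l2norm_nonneg[of \<xi>] l2norm_nonneg[of \<eta>] by (simp add: l2norm_def)
qed

lemma l2_scale:
  assumes "\<xi> \<in> l2"
  shows "(\<lambda>i. c * \<xi> i) \<in> l2" "l2norm (\<lambda>i. c * \<xi> i) \<le> cmod c * l2norm \<xi>"
  using l2_mult_bounded[OF assms, of "\<lambda>_. c" "cmod c"] by auto

lemma l2_diff:
  assumes "\<xi> \<in> l2" "\<eta> \<in> l2"
  shows "(\<lambda>i. \<xi> i - \<eta> i) \<in> l2" "l2norm (\<lambda>i. \<xi> i - \<eta> i) \<le> l2norm \<xi> + l2norm \<eta>"
proof -
  have e: "(\<lambda>i. \<xi> i - \<eta> i) = (\<lambda>i. \<xi> i + (\<lambda>i. (-1) * \<eta> i) i)" by auto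
  have m: "(\<lambda>i. (-1) * \<eta> i) \<in> l2" "l2norm (\<lambda>i. (-1) * \<eta> i) \<le> l2norm \<eta>"
    using l2_scale[OF assms(2), of "-1"] by auto
  show "(\<lambda>i. \<xi> i - \<eta> i) \<in> l2" unfolding e by (rule l2_add[OF assms(1) m(1)])
  show "l2norm (\<lambda>i. \<xi> i - \<eta> i) \<le> l2norm \<xi> + l2norm \<eta>"
    unfolding e using l2_add(2)[OF assms(1) m(1)] m(2) by simp
qed

lemma l2_sum:
  assumes "finite S" "\<And>n. n \<in> S \<Longrightarrow> f n \<in> l2"
  shows "(\<lambda>i. \<Sum>n\<in>S. f n i) \<in> l2 \<and> l2norm (\<lambda>i. \<Sum>n\<in>S. f n i) \<le> (\<Sum>n\<in>S. l2norm (f n))"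
  using assms
proof (induction S rule: finite_induct)
  case empty
  then show ?case by (simp add: l2_zero)
next
  case (insert x F)
  then have h: "(\<lambda>i. \<Sum>n\<in>F. f n i) \<in> l2" "l2norm (\<lambda>i. \<Sum>n\<in>F. f n i) \<le> (\<Sum>n\<in>F. l2norm (f n))"
    "f x \<in> l2" by auto
  have e: "(\<lambda>i. \<Sum>n\<in>insert x F. f n i) = (\<lambda>i. f x i + (\<lambda>i. \<Sum>n\<in>F. f n i) i)"
    using insert by auto
  show ?case unfolding e using l2_add[OF h(3) h(1)] h(2) insert by auto
qed

lemma l2_reindex_bij:
  assumes "bij \<sigma>" "\<xi> \<in> l2"
  shows "(\<lambda>i. \<xi> (\<sigma> i)) \<in> l2" "l2norm (\<lambda>i. \<xi> (\<sigma> i)) = l2norm \<xi>"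
proof -
  have b: "bij_betw \<sigma> UNIV UNIV" using assms(1) by (simp add: bij_def)
  show "(\<lambda>i. \<xi> (\<sigma> i)) \<in> l2" using assms(2)
    summable_on_reindex_bij_betw[OF b, of "\<lambda>i. (cmod (\<xi> i))^2"] by (simp add: l2_def)
  show "l2norm (\<lambda>i. \<xi> (\<sigma> i)) = l2norm \<xi>"
    using infsum_reindex_bij_betw[OF b, of "\<lambda>i. (cmod (\<xi> i))^2"] by (simp add: l2norm_def)
qed

lemma l2_ext:
  fixes w :: "'i \<Rightarrow> complex" and z :: "'j \<Rightarrow> complex"
  assumes "inj e" "\<And>j. w (e j) = z j" "\<And>i. i \<notin> range e \<Longrightarrow> w i = 0"
  shows "w \<in> l2 \<longleftrightarrow> z \<in> l2" "l2norm w = l2norm z"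
proof -
  have c: "(\<lambda>i. (cmod (w i))^2) summable_on UNIV \<longleftrightarrow> (\<lambda>i. (cmod (w i))^2) summable_on range e"
    by (rule summable_on_cong_neutral) (use assms(3) in auto)
  have r: "(\<lambda>i. (cmod (w i))^2) summable_on range e \<longleftrightarrow> (\<lambda>j. (cmod (z j))^2) summable_on UNIV"
    using summable_on_reindex[of e UNIV "\<lambda>i. (cmod (w i))^2"] assms(1,2) by (simp add: o_def)
  show "w \<in> l2 \<longleftrightarrow> z \<in> l2" using c r by (simp add: l2_def)
  have c2: "infsum (\<lambda>i. (cmod (w i))^2) UNIV = infsum (\<lambda>i. (cmod (w i))^2) (range e)"
    by (rule infsum_cong_neutral) (use assms(3) in auto)
  have r2: "infsum (\<lambda>i. (cmod (w i))^2) (range e) = infsum (\<lambda>j. (cmod (z j))^2) UNIV"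
    using infsum_reindex[of e UNIV "\<lambda>i. (cmod (w i))^2"] assms(1,2) by (simp add: o_def)
  show "l2norm w = l2norm z" using c2 r2 by (simp add: l2norm_def)
qed

lemma l2inner_summable:
  assumes "\<xi> \<in> l2" "\<eta> \<in> l2"
  shows "(\<lambda>i. \<xi> i * cnj (\<eta> i)) summable_on UNIV"
    "cmod (l2inner \<xi> \<eta>) \<le> l2norm \<xi> * l2norm \<eta>"
proof -
  have a: "Infinite_Sum.abs_summable_on (\<lambda>i. \<xi> i * cnj (\<eta> i)) UNIV"
    using l2_CS_real(1)[OF assms] by (simp add: norm_mult)
  show "(\<lambda>i. \<xi> i * cnj (\<eta> i)) summable_on UNIV" by (rule abs_summable_summable[OF a])
  have "cmod (l2inner \<xi> \<eta>) \<le> infsum (\<lambda>i. cmod (\<xi> i * cnj (\<eta> i))) UNIV"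
    unfolding l2inner_def by (rule norm_infsum_bound[OF a])
  also have "\<dots> \<le> l2norm \<xi> * l2norm \<eta>" using l2_CS_real(2)[OF assms] by (simp add: norm_mult)
  finally show "cmod (l2inner \<xi> \<eta>) \<le> l2norm \<xi> * l2norm \<eta>" .
qed

lemma l2inner_self:
  assumes "\<xi> \<in> l2"
  shows "l2inner \<xi> \<xi> = of_real ((l2norm \<xi>)^2)"
proof -
  have s: "(\<lambda>i. (cmod (\<xi> i))^2) summable_on UNIV" using assms by (simp add: l2_def)
  have "((\<lambda>i. of_real ((cmod (\<xi> i))^2) :: complex) has_sum of_real (infsum (\<lambda>i. (cmod (\<xi> i))^2) UNIV)) UNIV"
    by (rule has_sum_of_real) (use s in \<open>simp add: summable_iff_has_sum_infsum\<close>)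
  moreover have "\<And>i. \<xi> i * cnj (\<xi> i) = of_real ((cmod (\<xi> i))^2)"
    by (metis complex_norm_square of_real_power)
  ultimately show ?thesis unfolding l2inner_def l2norm_sq by (simp add: infsumI)
qed

lemma l2inner_lin2:
  assumes "\<xi> \<in> l2" "\<eta> \<in> l2" "\<zeta> \<in> l2"
  shows "l2inner \<xi> (\<lambda>i. a * \<eta> i + b * \<zeta> i) = cnj a * l2inner \<xi> \<eta> + cnj b * l2inner \<xi> \<zeta>"
proof -
  note s1 = l2inner_summable(1)[OF assms(1,2)]
  note s2 = l2inner_summable(1)[OF assms(1,3)]
  have "l2inner \<xi> (\<lambda>i. a * \<eta> i + b * \<zeta> i) = infsum (\<lambda>i. cnj a * (\<xi> i * cnj (\<eta> i)) + cnj b * (\<xi> i * cnj (\<zeta> i))) UNIV"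
    unfolding l2inner_def by (simp add: algebra_simps)
  also have "\<dots> = cnj a * l2inner \<xi> \<eta> + cnj b * l2inner \<xi> \<zeta>"
    unfolding l2inner_def
    using infsum_add[OF summable_on_cmult_right[OF s1, of "cnj a"] summable_on_cmult_right[OF s2, of "cnj b"]]
      infsum_cmult_right[OF s1, of "cnj a"] infsum_cmult_right[OF s2, of "cnj b"] by simp
  finally show ?thesis .
qed

lemma opnorm_le:
  fixes T :: "('i \<Rightarrow> complex) \<Rightarrow> ('i \<Rightarrow> complex)"
  assumes "\<And>\<xi>. \<xi> \<in> l2 \<Longrightarrow> l2norm \<xi> \<le> 1 \<Longrightarrow> l2norm (T \<xi>) \<le> C"
  shows "opnorm T \<le> C"
  unfolding opnorm_def
proof (rule cSup_least)
  show "{l2norm (T \<xi>) |\<xi>. \<xi> \<in> l2 \<and> l2norm \<xi> \<le> 1} \<noteq> {}"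
  proof -
    have "(\<lambda>i::'i. 0::complex) \<in> l2 \<and> l2norm (\<lambda>i::'i. 0::complex) \<le> 1" by (simp add: l2_zero)
    then show ?thesis by blast
  qed
  show "\<And>x. x \<in> {l2norm (T \<xi>) |\<xi>. \<xi> \<in> l2 \<and> l2norm \<xi> \<le> 1} \<Longrightarrow> x \<le> C"
  proof -
    fix x assume "x \<in> {l2norm (T \<xi>) |\<xi>. \<xi> \<in> l2 \<and> l2norm \<xi> \<le> 1}"
    then obtain \<xi> where "x = l2norm (T \<xi>)" "\<xi> \<in> l2" "l2norm \<xi> \<le> 1" by blast
    then show "x \<le> C" using assms by simp
  qed
qed

lemma opnorm_ge:
  assumes "\<And>\<xi>. \<xi> \<in> l2 \<Longrightarrow> l2norm \<xi> \<le> 1 \<Longrightarrow> l2norm (T \<xi>) \<le> C"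
    and "\<xi> \<in> l2" "l2norm \<xi> \<le> 1"
  shows "l2norm (T \<xi>) \<le> opnorm T"
  unfolding opnorm_def
proof (rule cSup_upper)
  show "l2norm (T \<xi>) \<in> {l2norm (T \<xi>) |\<xi>. \<xi> \<in> l2 \<and> l2norm \<xi> \<le> 1}" using assms(2,3) by blast
  show "bdd_above {l2norm (T \<xi>) |\<xi>. \<xi> \<in> l2 \<and> l2norm \<xi> \<le> 1}"
    by (rule bdd_aboveI[of _ C]) (use assms(1) in blast)
qed

lemma lin_bound_unit:
  assumes "\<And>\<xi>. \<xi> \<in> l2 \<Longrightarrow> l2norm (T \<xi>) \<le> C * l2norm \<xi>" "0 \<le> C"
    "\<xi> \<in> l2" "l2norm \<xi> \<le> 1"
  shows "l2norm (T \<xi>) \<le> C"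
  using assms(1)[OF assms(3)] mult_left_mono[OF assms(4) assms(2)] by simp

lemma opnorm_nonneg: "0 \<le> opnorm (T :: ('i \<Rightarrow> complex) \<Rightarrow> ('i \<Rightarrow> complex))" if "\<And>\<xi>. \<xi> \<in> l2 \<Longrightarrow> l2norm \<xi> \<le> 1 \<Longrightarrow> l2norm (T \<xi>) \<le> C"
proof -
  have z: "(\<lambda>i::'i. 0::complex) \<in> l2" "l2norm (\<lambda>i::'i. 0::complex) \<le> 1" by (simp_all add: l2_zero)
  show ?thesis using opnorm_ge[where T=T and C=C, OF that z(1) z(2)] l2norm_nonneg[of "T (\<lambda>i. 0)"] by linarith
qed

lemma sr_bo: "star_rep \<rho> \<Longrightarrow> continuous_on UNIV f \<Longrightarrow> \<xi> \<in> l2 \<Longrightarrow> \<rho> f \<xi> \<in> l2"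
  unfolding star_rep_def bounded_op_def by blast
lemma sr_add: "star_rep \<rho> \<Longrightarrow> continuous_on UNIV f \<Longrightarrow> continuous_on UNIV g \<Longrightarrow> \<xi> \<in> l2 \<Longrightarrow>
   \<rho> (\<lambda>x. f x + g x) \<xi> = (\<lambda>i. \<rho> f \<xi> i + \<rho> g \<xi> i)"
  unfolding star_rep_def by blast
lemma sr_mul: "star_rep \<rho> \<Longrightarrow> continuous_on UNIV f \<Longrightarrow> continuous_on UNIV g \<Longrightarrow> \<xi> \<in> l2 \<Longrightarrow>
   \<rho> (\<lambda>x. f x * g x) \<xi> = \<rho> f (\<rho> g \<xi>)"
  unfolding star_rep_def by blast
lemma sr_scal: "star_rep \<rho> \<Longrightarrow> continuous_on UNIV f \<Longrightarrow> \<xi> \<in> l2 \<Longrightarrow>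
   \<rho> (\<lambda>x. c * f x) \<xi> = (\<lambda>i. c * \<rho> f \<xi> i)"
  unfolding star_rep_def by blast
lemma sr_adj: "star_rep \<rho> \<Longrightarrow> continuous_on UNIV f \<Longrightarrow> \<xi> \<in> l2 \<Longrightarrow> \<eta> \<in> l2 \<Longrightarrow>
   l2inner (\<rho> f \<xi>) \<eta> = l2inner \<xi> (\<rho> (\<lambda>x. cnj (f x)) \<eta>)"
  unfolding star_rep_def by blast

lemma sr_K:
  assumes "star_rep \<rho>" "continuous_on UNIV h" "\<xi> \<in> l2"
  shows "of_real ((l2norm (\<rho> h \<xi>))^2) = l2inner \<xi> (\<rho> (\<lambda>x. cnj (h x) * h x) \<xi>)"
proof -
  have c: "continuous_on UNIV (\<lambda>x. cnj (h x))" using assms(2) by (intro continuous_intros)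
  have "of_real ((l2norm (\<rho> h \<xi>))^2) = l2inner (\<rho> h \<xi>) (\<rho> h \<xi>)"
    using l2inner_self[OF sr_bo[OF assms]] by simp
  also have "\<dots> = l2inner \<xi> (\<rho> (\<lambda>x. cnj (h x)) (\<rho> h \<xi>))"
    by (rule sr_adj[OF assms(1,2,3) sr_bo[OF assms]])
  also have "\<rho> (\<lambda>x. cnj (h x)) (\<rho> h \<xi>) = \<rho> (\<lambda>x. cnj (h x) * h x) \<xi>"
    using sr_mul[OF assms(1) c assms(2,3)] by simp
  finally show ?thesis .
qed

lemma star_rep_bound:
  assumes sr: "star_rep \<rho>" and cf: "continuous_on UNIV f" and B: "\<And>x. cmod (f x) \<le> B"
    and \<xi>: "\<xi> \<in> l2"
  shows "\<rho> f \<xi> \<in> l2" "l2norm (\<rho> f \<xi>) \<le> B * l2norm \<xi>"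
proof -
  show "\<rho> f \<xi> \<in> l2" by (rule sr_bo[OF sr cf \<xi>])
  have B0: "0 \<le> B" using B[of undefined] norm_ge_zero order_trans by blast
  define M where "M = B^2"
  define one where "one = (\<lambda>x::'a. 1::complex)"
  define g where "g = (\<lambda>x. complex_of_real (sqrt (M - (cmod (f x))^2)))"
  have cone: "continuous_on UNIV one" by (simp add: one_def)
  have cg: "continuous_on UNIV g" unfolding g_def using cf by (intro continuous_intros)
  have Mge: "\<And>x. (cmod (f x))^2 \<le> M" unfolding M_def using B by (simp add: power_mono)
  have r1: "\<rho> one \<xi> \<in> l2" by (rule sr_bo[OF sr cone \<xi>])
  have K1: "of_real ((l2norm (\<rho> one \<xi>))^2) = l2inner \<xi> (\<rho> one \<xi>)"
    using sr_K[OF sr cone \<xi>] by (simp add: one_def)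
  have one_le: "l2norm (\<rho> one \<xi>) \<le> l2norm \<xi>"
  proof -
    have "(l2norm (\<rho> one \<xi>))^2 = cmod (l2inner \<xi> (\<rho> one \<xi>))"
      using K1 by (metis norm_of_real abs_of_nonneg zero_le_power2)
    also have "\<dots> \<le> l2norm \<xi> * l2norm (\<rho> one \<xi>)" by (rule l2inner_summable(2)[OF \<xi> r1])
    finally have h: "l2norm (\<rho> one \<xi>) * l2norm (\<rho> one \<xi>) \<le> l2norm \<xi> * l2norm (\<rho> one \<xi>)"
      by (simp add: power2_eq_square)
    show ?thesis
    proof (cases "l2norm (\<rho> one \<xi>) = 0")
      case True then show ?thesis using l2norm_nonneg[of \<xi>] by simp
    next
      case False
      then have "0 < l2norm (\<rho> one \<xi>)" using l2norm_nonneg[of "\<rho> one \<xi>"] by simp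
      then show ?thesis using mult_right_le_imp_le[OF h] by blast
    qed
  qed
  define q where "q = (\<lambda>x. cnj (g x) * g x)"
  have cq: "continuous_on UNIV q" unfolding q_def using cg by (intro continuous_intros)
  have pq: "(\<lambda>x. cnj (f x) * f x) = (\<lambda>x. of_real M * one x + (-1) * q x)"
  proof
    fix x
    have "cnj (g x) * g x = of_real (sqrt (M - (cmod (f x))^2) * sqrt (M - (cmod (f x))^2))"
      unfolding g_def by (simp only: complex_cnj_complex_of_real of_real_mult)
    also have "sqrt (M - (cmod (f x))^2) * sqrt (M - (cmod (f x))^2) = M - (cmod (f x))^2"
      using Mge[of x] by simp
    finally have "cnj (g x) * g x = of_real (M - (cmod (f x))^2)" .
    moreover have "cnj (f x) * f x = of_real ((cmod (f x))^2)"
      by (metis complex_norm_square mult.commute of_real_power)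
    ultimately show "cnj (f x) * f x = of_real M * one x + (-1) * q x"
      by (simp add: q_def one_def)
  qed
  have c1: "continuous_on UNIV (\<lambda>x. of_real M * one x)" using cone by (intro continuous_intros)
  have c2: "continuous_on UNIV (\<lambda>x. (-1) * q x)" using cq by (intro continuous_intros)
  have rq: "\<rho> q \<xi> \<in> l2" by (rule sr_bo[OF sr cq \<xi>])
  have dec: "\<rho> (\<lambda>x. cnj (f x) * f x) \<xi> = (\<lambda>i. of_real M * \<rho> one \<xi> i + (-1) * \<rho> q \<xi> i)"
    unfolding pq sr_add[OF sr c1 c2 \<xi>] sr_scal[OF sr cone \<xi>] sr_scal[OF sr cq \<xi>] by simp
  have "of_real ((l2norm (\<rho> f \<xi>))^2) = l2inner \<xi> (\<rho> (\<lambda>x. cnj (f x) * f x) \<xi>)"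
    by (rule sr_K[OF sr cf \<xi>])
  also have "\<dots> = of_real M * l2inner \<xi> (\<rho> one \<xi>) - l2inner \<xi> (\<rho> q \<xi>)"
    unfolding dec l2inner_lin2[OF \<xi> r1 rq] by simp
  also have "l2inner \<xi> (\<rho> q \<xi>) = of_real ((l2norm (\<rho> g \<xi>))^2)"
    using sr_K[OF sr cg \<xi>] by (simp add: q_def)
  finally have "of_real ((l2norm (\<rho> f \<xi>))^2) = (of_real (M * (l2norm (\<rho> one \<xi>))^2 - (l2norm (\<rho> g \<xi>))^2) :: complex)"
    unfolding K1[symmetric] by simp
  then have "(l2norm (\<rho> f \<xi>))^2 = M * (l2norm (\<rho> one \<xi>))^2 - (l2norm (\<rho> g \<xi>))^2"
    using of_real_eq_iff by blast
  also have "\<dots> \<le> M * (l2norm (\<rho> one \<xi>))^2" by simp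
  also have "\<dots> \<le> M * (l2norm \<xi>)^2"
    unfolding M_def by (intro mult_left_mono power_mono one_le l2norm_nonneg) simp
  also have "\<dots> = (B * l2norm \<xi>)^2" by (simp add: M_def power_mult_distrib)
  finally show "l2norm (\<rho> f \<xi>) \<le> B * l2norm \<xi>"
    by (rule power2_le_imp_le) (use B0 l2norm_nonneg[of \<xi>] in auto)
qed

lemma Vpow:
  fixes V :: "('i \<Rightarrow> complex) \<Rightarrow> ('i \<Rightarrow> complex)"
  assumes "\<And>\<xi>. \<xi> \<in> l2 \<Longrightarrow> V \<xi> \<in> l2 \<and> l2norm (V \<xi>) = l2norm \<xi>" "\<xi> \<in> l2"
  shows "(V ^^ n) \<xi> \<in> l2 \<and> l2norm ((V ^^ n) \<xi>) = l2norm \<xi>"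
proof (induction n)
  case 0
  show ?case using assms(2) by simp
next
  case (Suc n)
  then show ?case using assms(1)[of "(V ^^ n) \<xi>"] by simp
qed

abbreviation supp :: "(nat \<Rightarrow> 'x \<Rightarrow> complex) \<Rightarrow> nat set" where
  "supp G \<equiv> {n. \<exists>x. G n x \<noteq> 0}"

lemma rep_bound:
  fixes V :: "('i \<Rightarrow> complex) \<Rightarrow> ('i \<Rightarrow> complex)"
  assumes "finite (supp G)"
    "\<And>\<xi>. \<xi> \<in> l2 \<Longrightarrow> V \<xi> \<in> l2 \<and> l2norm (V \<xi>) = l2norm \<xi>"
    "\<And>n \<xi>. n \<in> supp G \<Longrightarrow> \<xi> \<in> l2 \<Longrightarrow> \<rho> (G n) \<xi> \<in> l2 \<and> l2norm (\<rho> (G n) \<xi>) \<le> B n * l2norm \<xi>"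
    "\<xi> \<in> l2"
  shows "rep \<rho> V G \<xi> \<in> l2 \<and> l2norm (rep \<rho> V G \<xi>) \<le> (\<Sum>n\<in>supp G. B n) * l2norm \<xi>"
proof -
  have f: "\<And>n. n \<in> supp G \<Longrightarrow> (V ^^ n) (\<rho> (G n) \<xi>) \<in> l2 \<and> l2norm ((V ^^ n) (\<rho> (G n) \<xi>)) \<le> B n * l2norm \<xi>"
    using Vpow[OF assms(2)] assms(3,4) by metis
  have s: "(\<lambda>i. \<Sum>n\<in>supp G. (V ^^ n) (\<rho> (G n) \<xi>) i) \<in> l2 \<and>
     l2norm (\<lambda>i. \<Sum>n\<in>supp G. (V ^^ n) (\<rho> (G n) \<xi>) i) \<le> (\<Sum>n\<in>supp G. l2norm ((V ^^ n) (\<rho> (G n) \<xi>)))"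
    by (rule l2_sum[OF assms(1)]) (use f in blast)
  have "(\<Sum>n\<in>supp G. l2norm ((V ^^ n) (\<rho> (G n) \<xi>))) \<le> (\<Sum>n\<in>supp G. B n * l2norm \<xi>)"
    by (rule sum_mono) (use f in blast)
  also have "\<dots> = (\<Sum>n\<in>supp G. B n) * l2norm \<xi>" by (simp add: sum_distrib_right)
  finally show ?thesis using s unfolding rep_def by simp
qed

definition snorm :: "('a::topological_space \<Rightarrow> complex) \<Rightarrow> real" where
  "snorm f = (SUP x. cmod (f x))"

lemma snorm_ge:
  assumes "compact (UNIV :: 'a::topological_space set)" "continuous_on UNIV (f :: 'a \<Rightarrow> complex)"
  shows "cmod (f x) \<le> snorm f"
proof -
  have "compact (f ` UNIV)" by (rule compact_continuous_image[OF assms(2,1)])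
  then have "bounded (f ` UNIV)" by (rule compact_imp_bounded)
  then obtain a where a: "\<And>y. y \<in> f ` UNIV \<Longrightarrow> norm y \<le> a" by (auto simp: bounded_iff)
  have "bdd_above (range (\<lambda>x. cmod (f x)))" by (rule bdd_aboveI[of _ a]) (use a in auto)
  then show ?thesis unfolding snorm_def by (rule cSUP_upper[OF UNIV_I])
qed

lemma snorm_nonneg:
  assumes "compact (UNIV :: 'a::topological_space set)" "continuous_on UNIV (f :: 'a \<Rightarrow> complex)"
  shows "0 \<le> snorm f"
  using snorm_ge[OF assms, of undefined] norm_ge_zero[of "f undefined"] by linarith

definition nb :: "(nat \<Rightarrow> 'a::topological_space \<Rightarrow> complex) \<Rightarrow> real" where
  "nb G = (\<Sum>n\<in>supp G. snorm (G n))"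

lemma nb_nonneg:
  assumes "compact (UNIV :: 'a::topological_space set)" "G \<in> poly_elems"
  shows "0 \<le> nb (G :: nat \<Rightarrow> 'a \<Rightarrow> complex)"
  unfolding nb_def using assms by (intro sum_nonneg snorm_nonneg) (auto simp: poly_elems_def)

lemma cov_rep_bound:
  assumes "compact (UNIV :: 'a::topological_space set)" "cov_rep \<phi> \<rho> V" "G \<in> poly_elems" "\<xi> \<in> l2"
  shows "rep \<rho> V (G :: nat \<Rightarrow> 'a \<Rightarrow> complex) \<xi> \<in> l2 \<and> l2norm (rep \<rho> V G \<xi>) \<le> nb G * l2norm \<xi>"
  unfolding nb_def
proof (rule rep_bound)
  show "finite (supp G)" using assms(3) by (simp add: poly_elems_def)
  have sr: "star_rep \<rho>" and bo: "bounded_op V" and iso: "\<forall>\<xi>\<in>l2. l2norm (V \<xi>) = l2norm \<xi>"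
    using assms(2) by (simp_all add: cov_rep_def)
  show "\<And>\<xi>. \<xi> \<in> l2 \<Longrightarrow> V \<xi> \<in> l2 \<and> l2norm (V \<xi>) = l2norm \<xi>"
    using bo iso by (simp add: bounded_op_def)
  have c: "\<And>n. continuous_on UNIV (G n)" using assms(3) by (simp add: poly_elems_def)
  show "\<And>n \<xi>. n \<in> supp G \<Longrightarrow> \<xi> \<in> l2 \<Longrightarrow> \<rho> (G n) \<xi> \<in> l2 \<and> l2norm (\<rho> (G n) \<xi>) \<le> snorm (G n) * l2norm \<xi>"
    using star_rep_bound[OF sr c snorm_ge[OF assms(1) c]] by blast
  show "\<xi> \<in> l2" by (rule assms(4))
qed

lemma univ_ge:
  fixes \<rho> :: "('a::topological_space \<Rightarrow> complex) \<Rightarrow> ((nat \<Rightarrow> 'a \<Rightarrow> complex) \<Rightarrow> complex) \<Rightarrow> ((nat \<Rightarrow> 'a \<Rightarrow> complex) \<Rightarrow> complex)"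
  assumes "compact (UNIV :: 'a set)" "cov_rep \<phi> \<rho> V" "G \<in> poly_elems"
  shows "opnorm (rep \<rho> V G) \<le> univ_norm \<phi> G"
proof -
  define T where "T = {opnorm (rep \<rho> V G) |
      (\<rho> :: ('a \<Rightarrow> complex) \<Rightarrow> ((nat \<Rightarrow> 'a \<Rightarrow> complex) \<Rightarrow> complex) \<Rightarrow> ((nat \<Rightarrow> 'a \<Rightarrow> complex) \<Rightarrow> complex))
      V. cov_rep \<phi> \<rho> V}"
  have u: "univ_norm \<phi> G = Sup T" unfolding T_def univ_norm_def by simp
  have mem: "opnorm (rep \<rho> V G) \<in> T"
    unfolding T_def apply (rule CollectI) apply (rule exI[of _ \<rho>]) apply (rule exI[of _ V]) using assms(2) by simp
  have b: "\<And>\<rho>' V'. cov_rep \<phi> \<rho>' V' \<Longrightarrow> opnorm (rep (\<rho>' :: ('a \<Rightarrow> complex) \<Rightarrow> ((nat \<Rightarrow> 'a \<Rightarrow> complex) \<Rightarrow> complex) \<Rightarrow> ((nat \<Rightarrow> 'a \<Rightarrow> complex) \<Rightarrow> complex)) V' G) \<le> nb G"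
  proof -
    fix \<rho>' :: "('a \<Rightarrow> complex) \<Rightarrow> ((nat \<Rightarrow> 'a \<Rightarrow> complex) \<Rightarrow> complex) \<Rightarrow> ((nat \<Rightarrow> 'a \<Rightarrow> complex) \<Rightarrow> complex)" and V'
    assume cr: "cov_rep \<phi> \<rho>' V'"
    show "opnorm (rep \<rho>' V' G) \<le> nb G"
    proof (rule opnorm_le)
      fix \<xi> :: "(nat \<Rightarrow> 'a \<Rightarrow> complex) \<Rightarrow> complex" assume "\<xi> \<in> l2" "l2norm \<xi> \<le> 1"
      then show "l2norm (rep \<rho>' V' G \<xi>) \<le> nb G"
        using lin_bound_unit[of "rep \<rho>' V' G" "nb G" \<xi>] cov_rep_bound[OF assms(1) cr assms(3)] nb_nonneg[OF assms(1,3)]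
        by blast
    qed
  qed
  have bdd: "bdd_above T"
    unfolding T_def by (rule bdd_aboveI[of _ "nb G"]) (use b in blast)
  show ?thesis unfolding u by (rule cSup_upper[OF mem bdd])
qed

definition aseq :: "('a \<Rightarrow> 'a) \<Rightarrow> (nat \<Rightarrow> 'a) \<Rightarrow> int \<Rightarrow> 'a" where
  "aseq \<phi> xt n = pext (tphi_pow \<phi> n xt)"

lemma tphi_pow0: "(tphi \<phi> ^^ k) x 0 = (\<phi> ^^ k) (x 0)"
  by (induction k) (simp_all add: tphi_def)

lemma tshift_pow: "(tshift ^^ k) x = (\<lambda>i. x (i + k))"
  by (induction k) (simp_all add: tshift_def)

lemma aseq_eq: "aseq \<phi> xt n = (if 0 \<le> n then (\<phi> ^^ nat n) (xt 0) else xt (nat (- n)))"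
  unfolding aseq_def pext_def tphi_pow_def
  by (cases "0 \<le> n") (simp_all only: if_True if_False tphi_pow0 tshift_pow add_0)

lemma aseq_succ:
  assumes "xt \<in> Xt \<phi>"
  shows "aseq \<phi> xt (n + 1) = \<phi> (aseq \<phi> xt n)"
proof -
  have X: "\<And>k. xt k = \<phi> (xt (Suc k))" using assms unfolding Xt_def by blast
  consider "0 \<le> n" | "n = -1" | "n < -1" by linarith
  then show ?thesis
  proof cases
    case 1
    then have e: "nat (n + 1) = Suc (nat n)" by simp
    have "aseq \<phi> xt (n + 1) = (\<phi> ^^ nat (n + 1)) (xt 0)" using 1 by (simp add: aseq_eq)
    also have "\<dots> = \<phi> ((\<phi> ^^ nat n) (xt 0))" unfolding e by simp
    also have "\<dots> = \<phi> (aseq \<phi> xt n)" using 1 by (simp add: aseq_eq)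
    finally show ?thesis .
  next
    case 2
    have "aseq \<phi> xt (n + 1) = xt 0" using 2 by (simp add: aseq_eq)
    moreover have "aseq \<phi> xt n = xt 1" using 2 by (simp add: aseq_eq)
    ultimately show ?thesis using X[of 0] by simp
  next
    case 3
    define k where "k = nat (- n - 2)"
    have n: "n = - int k - 2" using 3 by (simp add: k_def)
    have "aseq \<phi> xt (n + 1) = xt (Suc k)"
      unfolding aseq_eq n by (simp add: nat_add_distrib)
    moreover have "aseq \<phi> xt n = xt (Suc (Suc k))"
      unfolding aseq_eq n by (simp add: nat_add_distrib)
    ultimately show ?thesis using X[of "Suc k"] by simp
  qed
qed

lemma aseq_add:
  assumes "xt \<in> Xt \<phi>"
  shows "aseq \<phi> xt (m + int i) = (\<phi> ^^ i) (aseq \<phi> xt m)"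
proof (induction i)
  case 0
  then show ?case by simp
next
  case (Suc i)
  have "aseq \<phi> xt (m + int (Suc i)) = aseq \<phi> xt ((m + int i) + 1)" by (simp add: algebra_simps)
  also have "\<dots> = \<phi> (aseq \<phi> xt (m + int i))" by (rule aseq_succ[OF assms])
  finally show ?case using Suc by simp
qed

lemma orbit_image: "pext ` orbit \<phi> xt = range (aseq \<phi> xt)"
  unfolding orbit_def aseq_def by (simp add: image_image)


lemma shiftN_pow:
  "((\<lambda>z k. if k = 0 then 0 else z (k - 1)) ^^ j) z = (\<lambda>k. if j \<le> k then z (k - j) else (0::complex))"
proof (induction j)
  case 0
  then show ?case by simp
next
  case (Suc j)
  show ?case
  proof
    fix k :: nat
    show "((\<lambda>z k. if k = 0 then 0 else z (k - 1)) ^^ Suc j) z k = (if Suc j \<le> k then z (k - Suc j) else 0)"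
      using Suc by (cases k) auto
  qed
qed

lemma pi_y_formula:
  "pi_y \<phi> y G z k = (\<Sum>j\<in>supp G. if j \<le> k then G j ((\<phi> ^^ (k - j)) y) * z (k - j) else 0)"
  unfolding pi_y_def rep_def shiftN_pow
  by (rule sum.cong) (auto simp: funpow_add[symmetric] le_add_diff_inverse2)

lemma shiftZ_pow: "((\<lambda>\<xi> n. \<xi> (n - 1)) ^^ j) \<xi> = (\<lambda>n. \<xi> (n - int j))"
  by (induction j) (simp_all add: algebra_simps)

lemma supp_tilde: "supp (tilde G) = supp G"
proof -
  have "\<And>n. (\<exists>x. tilde G n x \<noteq> 0) \<longleftrightarrow> (\<exists>x. G n x \<noteq> 0)"
  proof
    fix n assume "\<exists>x. tilde G n x \<noteq> 0" then show "\<exists>x. G n x \<noteq> 0" by (auto simp: tilde_def)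
  next
    fix n assume "\<exists>x. G n x \<noteq> 0"
    then obtain x where "G n x \<noteq> 0" by blast
    then have "tilde G n (\<lambda>_. x) \<noteq> 0" by (simp add: tilde_def pext_def)
    then show "\<exists>x. tilde G n x \<noteq> 0" by blast
  qed
  then show ?thesis by simp
qed

lemma Pi_formula:
  "Pi_x \<phi> xt (tilde G) \<xi> n = (\<Sum>j\<in>supp G. G j (aseq \<phi> xt (n - int j)) * \<xi> (n - int j))"
  unfolding Pi_x_def rep_def shiftZ_pow supp_tilde
  by (simp add: tilde_def aseq_def)

lemma Pi_bound:
  assumes "compact (UNIV :: 'a::topological_space set)" "G \<in> poly_elems" "\<xi> \<in> l2"
  shows "Pi_x \<phi> xt (tilde (G :: nat \<Rightarrow> 'a \<Rightarrow> complex)) \<xi> \<in> l2 \<and> l2norm (Pi_x \<phi> xt (tilde G) \<xi>) \<le> nb G * l2norm \<xi>"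
proof -
  have c: "\<And>n. continuous_on UNIV (G n)" using assms(2) by (simp add: poly_elems_def)
  have "rep (\<lambda>g \<xi> n. g (tphi_pow \<phi> n xt) * \<xi> n) (\<lambda>\<xi> n. \<xi> (n - 1)) (tilde G) \<xi> \<in> l2 \<and>
    l2norm (rep (\<lambda>g \<xi> n. g (tphi_pow \<phi> n xt) * \<xi> n) (\<lambda>\<xi> n. \<xi> (n - 1)) (tilde G) \<xi>)
      \<le> (\<Sum>n\<in>supp (tilde G). snorm (G n)) * l2norm \<xi>"
  proof (rule rep_bound)
    show "finite (supp (tilde G))" using assms(2) by (simp add: supp_tilde poly_elems_def)
    have b: "bij (\<lambda>n::int. n - 1)"
      by (rule bij_betw_byWitness[where f'="\<lambda>n. n + 1"]) auto
    show "\<And>\<xi> :: int \<Rightarrow> complex. \<xi> \<in> l2 \<Longrightarrow> (\<lambda>n. \<xi> (n - 1)) \<in> l2 \<and> l2norm (\<lambda>n. \<xi> (n - 1)) = l2norm \<xi>"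
    proof -
      fix \<xi> :: "int \<Rightarrow> complex" assume x: "\<xi> \<in> l2"
      show "(\<lambda>n. \<xi> (n - 1)) \<in> l2 \<and> l2norm (\<lambda>n. \<xi> (n - 1)) = l2norm \<xi>"
        using l2_reindex_bij[OF b x] by simp
    qed
    show "\<And>n \<xi>. \<xi> \<in> l2 \<Longrightarrow> (\<lambda>na. tilde G n (tphi_pow \<phi> na xt) * \<xi> na) \<in> l2 \<and>
          l2norm (\<lambda>na. tilde G n (tphi_pow \<phi> na xt) * \<xi> na) \<le> snorm (G n) * l2norm \<xi>"
    proof -
      fix n and \<xi> :: "int \<Rightarrow> complex" assume x: "\<xi> \<in> l2"
      have bb: "\<And>i. cmod (tilde G n (tphi_pow \<phi> i xt)) \<le> snorm (G n)"
        unfolding tilde_def o_def by (rule snorm_ge[OF assms(1) c])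
      then show "(\<lambda>na. tilde G n (tphi_pow \<phi> na xt) * \<xi> na) \<in> l2 \<and>
          l2norm (\<lambda>na. tilde G n (tphi_pow \<phi> na xt) * \<xi> na) \<le> snorm (G n) * l2norm \<xi>"
        using l2_mult_bounded[OF x, of "\<lambda>i. tilde G n (tphi_pow \<phi> i xt)", OF bb] by blast
    qed
    show "\<xi> \<in> l2" by (rule assms(3))
  qed
  then show ?thesis unfolding Pi_x_def nb_def supp_tilde by simp
qed

definition E :: "int \<Rightarrow> (nat \<Rightarrow> complex) \<Rightarrow> int \<Rightarrow> complex" where
  "E m z = (\<lambda>n. if m \<le> n then z (nat (n - m)) else 0)"

lemma E_l2: "E m z \<in> l2 \<longleftrightarrow> z \<in> l2" "l2norm (E m z) = l2norm z"
proof -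
  have i: "inj (\<lambda>k::nat. m + int k)" by (rule injI) simp
  have w: "\<And>k. E m z (m + int k) = z k" by (simp add: E_def)
  have o: "\<And>i. i \<notin> range (\<lambda>k::nat. m + int k) \<Longrightarrow> E m z i = 0"
  proof -
    fix i assume a: "i \<notin> range (\<lambda>k::nat. m + int k)"
    have "\<not> m \<le> i"
    proof
      assume "m \<le> i"
      then have "i = m + int (nat (i - m))" by simp
      then show False using a by blast
    qed
    then show "E m z i = 0" by (simp add: E_def)
  qed
  show "E m z \<in> l2 \<longleftrightarrow> z \<in> l2" "l2norm (E m z) = l2norm z"
    using l2_ext[where e="\<lambda>k::nat. m + int k" and w="E m z" and z=z, OF i w o] by auto
qed

lemma Pi_E:
  assumes "xt \<in> Xt \<phi>"
  shows "Pi_x \<phi> xt (tilde G) (E m z) = E m (pi_y \<phi> (aseq \<phi> xt m) G z)"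
proof
  fix n
  show "Pi_x \<phi> xt (tilde G) (E m z) n = E m (pi_y \<phi> (aseq \<phi> xt m) G z) n"
  proof (cases "m \<le> n")
    case True
    define k where "k = nat (n - m)"
    have nk: "n = m + int k" using True by (simp add: k_def)
    have "Pi_x \<phi> xt (tilde G) (E m z) n = (\<Sum>j\<in>supp G. if j \<le> k then G j ((\<phi> ^^ (k - j)) (aseq \<phi> xt m)) * z (k - j) else 0)"
      unfolding Pi_formula
    proof (rule sum.cong[OF refl])
      fix j assume "j \<in> supp G"
      show "G j (aseq \<phi> xt (n - int j)) * E m z (n - int j) =
          (if j \<le> k then G j ((\<phi> ^^ (k - j)) (aseq \<phi> xt m)) * z (k - j) else 0)"
      proof (cases "j \<le> k")
        case True
        then have e: "n - int j = m + int (k - j)" using nk by simp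
        have e2: "nat (m + int (k - j) - m) = k - j" by simp
        show ?thesis unfolding e aseq_add[OF assms] E_def e2 using True by simp
      next
        case False
        then show ?thesis using nk by (simp add: E_def)
      qed
    qed
    moreover have "E m (pi_y \<phi> (aseq \<phi> xt m) G z) n = pi_y \<phi> (aseq \<phi> xt m) G z k"
      using True by (simp add: E_def k_def)
    ultimately show ?thesis by (simp add: pi_y_formula)
  next
    case False
    then show ?thesis by (simp add: Pi_formula E_def)
  qed
qed

lemma pi_bound:
  assumes "compact (UNIV :: 'a::topological_space set)" "G \<in> poly_elems" "z \<in> l2" "xt \<in> Xt \<phi>"
  shows "pi_y \<phi> (aseq \<phi> xt m) (G :: nat \<Rightarrow> 'a \<Rightarrow> complex) z \<in> l2 \<and>
    l2norm (pi_y \<phi> (aseq \<phi> xt m) G z) \<le> nb G * l2norm z"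
  using Pi_bound[OF assms(1,2), of "E m z" \<phi> xt] assms(3) E_l2[of m z] E_l2[of m "pi_y \<phi> (aseq \<phi> xt m) G z"]
    Pi_E[OF assms(4), of G m z] by simp

lemma tail_small:
  fixes \<xi> :: "int \<Rightarrow> complex"
  assumes "\<xi> \<in> l2" "\<delta> > 0"
  shows "\<exists>m. infsum (\<lambda>n. (cmod (\<xi> n))^2) {..<m} \<le> \<delta>"
proof -
  have s: "(\<lambda>n. (cmod (\<xi> n))^2) summable_on UNIV" using assms(1) by (simp add: l2_def)
  obtain F where F: "finite F" "F \<subseteq> UNIV"
    "dist (sum (\<lambda>n. (cmod (\<xi> n))^2) F) (infsum (\<lambda>n. (cmod (\<xi> n))^2) UNIV) \<le> \<delta>"
    using infsum_finite_approximation[OF s assms(2)] by blast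
  define m where "m = Min (insert 0 F)"
  have mF: "\<And>n. n \<in> F \<Longrightarrow> m \<le> n" unfolding m_def using F(1) by simp
  have s1: "(\<lambda>n. (cmod (\<xi> n))^2) summable_on {..<m}" by (rule summable_on_subset_banach[OF s]) simp
  have s2: "(\<lambda>n. (cmod (\<xi> n))^2) summable_on (- {..<m})" by (rule summable_on_subset_banach[OF s]) simp
  have u: "infsum (\<lambda>n. (cmod (\<xi> n))^2) UNIV = infsum (\<lambda>n. (cmod (\<xi> n))^2) {..<m} + infsum (\<lambda>n. (cmod (\<xi> n))^2) (- {..<m})"
  proof -
    have un: "{..<m} \<union> - {..<m} = (UNIV :: int set)" by auto
    have d: "{..<m} \<inter> - {..<m} = ({} :: int set)" by auto
    have "infsum (\<lambda>n. (cmod (\<xi> n))^2) ({..<m} \<union> - {..<m}) = infsum (\<lambda>n. (cmod (\<xi> n))^2) {..<m} + infsum (\<lambda>n. (cmod (\<xi> n))^2) (- {..<m})"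
      by (rule infsum_Un_disjoint[OF s1 s2 d])
    then show ?thesis by (simp only: un)
  qed
  have "sum (\<lambda>n. (cmod (\<xi> n))^2) F \<le> infsum (\<lambda>n. (cmod (\<xi> n))^2) (- {..<m})"
    by (rule finite_sum_le_infsum[OF s2 F(1)]) (use mF in \<open>auto simp: not_less\<close>)
  then have "infsum (\<lambda>n. (cmod (\<xi> n))^2) {..<m} \<le> \<delta>"
    using F(3) u by (simp add: dist_real_def)
  then show ?thesis by blast
qed

lemma Pi_add: "Pi_x \<phi> xt (tilde G) (\<lambda>n. u n + v n) = (\<lambda>n. Pi_x \<phi> xt (tilde G) u n + Pi_x \<phi> xt (tilde G) v n)"
  by (rule ext) (simp add: Pi_formula distrib_left sum.distrib)

lemma main_identity:
  assumes cpt: "compact (UNIV :: 'a::topological_space set)" and G: "G \<in> poly_elems" and xt: "xt \<in> Xt \<phi>"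
  shows "opnorm (Pi_x \<phi> xt (tilde (G :: nat \<Rightarrow> 'a \<Rightarrow> complex))) = (SUP m. opnorm (pi_y \<phi> (aseq \<phi> xt m) G))"
proof -
  define P where "P = Pi_x \<phi> xt (tilde G)"
  define p where "p = (\<lambda>m. pi_y \<phi> (aseq \<phi> xt m) G)"
  define C where "C = nb G"
  have C0: "0 \<le> C" unfolding C_def by (rule nb_nonneg[OF cpt G])
  have PB: "\<And>\<xi>. \<xi> \<in> l2 \<Longrightarrow> P \<xi> \<in> l2 \<and> l2norm (P \<xi>) \<le> C * l2norm \<xi>"
    unfolding P_def C_def using Pi_bound[OF cpt G] by blast
  have PU: "\<And>\<xi>. \<xi> \<in> l2 \<Longrightarrow> l2norm \<xi> \<le> 1 \<Longrightarrow> l2norm (P \<xi>) \<le> C"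
    using lin_bound_unit[OF _ C0] PB by blast
  have pB: "\<And>m z. z \<in> l2 \<Longrightarrow> p m z \<in> l2 \<and> l2norm (p m z) \<le> C * l2norm z"
    unfolding p_def C_def using pi_bound[OF cpt G _ xt] by blast
  have pU: "\<And>m z. z \<in> l2 \<Longrightarrow> l2norm z \<le> 1 \<Longrightarrow> l2norm (p m z) \<le> C"
    using lin_bound_unit[OF _ C0] pB by blast
  have PE: "\<And>m z. P (E m z) = E m (p m z)" unfolding P_def p_def by (rule Pi_E[OF xt])
  have p_le: "opnorm (p m) \<le> opnorm P" for m
  proof (rule opnorm_le)
    fix z :: "nat \<Rightarrow> complex" assume z: "z \<in> l2" "l2norm z \<le> 1"
    have "l2norm (p m z) = l2norm (P (E m z))" unfolding PE E_l2 ..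
    also have "\<dots> \<le> opnorm P"
      by (rule opnorm_ge[of P C, OF PU]) (use z E_l2 in auto)
    finally show "l2norm (p m z) \<le> opnorm P" .
  qed
  have p_C: "\<And>m. opnorm (p m) \<le> C" by (rule opnorm_le) (rule pU)
  have bdd: "bdd_above (range (\<lambda>m. opnorm (p m)))" by (rule bdd_aboveI[of _ C]) (use p_C in auto)
  have ge: "(SUP m. opnorm (p m)) \<le> opnorm P" by (rule cSUP_least) (use p_le in auto)
  have le: "opnorm P \<le> (SUP m. opnorm (p m))"
  proof (rule opnorm_le)
    fix \<xi> :: "int \<Rightarrow> complex" assume \<xi>: "\<xi> \<in> l2" "l2norm \<xi> \<le> 1"
    show "l2norm (P \<xi>) \<le> (SUP m. opnorm (p m))"
    proof (rule field_le_epsilon)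
      fix \<epsilon> :: real assume ep: "0 < \<epsilon>"
      define \<delta> where "\<delta> = (\<epsilon> / (C + 1))^2"
      have dp: "\<delta> > 0" unfolding \<delta>_def using ep C0 by simp
      obtain m where m: "infsum (\<lambda>n. (cmod (\<xi> n))^2) {..<m} \<le> \<delta>"
        using tail_small[OF \<xi>(1) dp] by blast
      define z where "z = (\<lambda>k::nat. \<xi> (m + int k))"
      define r where "r = (\<lambda>n. if m \<le> n then 0 else \<xi> n)"
      have Ez: "E m z = (\<lambda>n. if m \<le> n then \<xi> n else 0)" by (auto simp: E_def z_def)
      have dec: "\<xi> = (\<lambda>n. E m z n + r n)" unfolding Ez r_def by auto
      have Ezl: "E m z \<in> l2" "l2norm (E m z) \<le> l2norm \<xi>"
        using l2_mono[OF \<xi>(1), of "E m z"] unfolding Ez by auto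
      have zl: "z \<in> l2" "l2norm z \<le> 1" using Ezl E_l2[of m z] \<xi>(2) by auto
      have rl: "r \<in> l2" using l2_mono(1)[OF \<xi>(1), of r] unfolding r_def by auto
      have "infsum (\<lambda>n. (cmod (r n))^2) UNIV = infsum (\<lambda>n. (cmod (\<xi> n))^2) {..<m}"
        by (rule infsum_cong_neutral) (auto simp: r_def)
      then have "(l2norm r)^2 \<le> \<delta>" using m by (simp add: l2norm_sq)
      then have rn: "l2norm r \<le> \<epsilon> / (C + 1)"
        unfolding \<delta>_def by (rule power2_le_imp_le) (use ep C0 in simp)
      have "P \<xi> = (\<lambda>n. P (E m z) n + P r n)" unfolding P_def by (subst dec) (rule Pi_add)
      then have "l2norm (P \<xi>) \<le> l2norm (P (E m z)) + l2norm (P r)"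
        using l2_add(2)[of "P (E m z)" "P r"] PB[OF Ezl(1)] PB[OF rl] by simp
      also have "l2norm (P (E m z)) = l2norm (p m z)" unfolding PE E_l2 ..
      also have "l2norm (p m z) \<le> opnorm (p m)" by (rule opnorm_ge[of "p m" C, OF pU zl])
      also have "opnorm (p m) \<le> (SUP m. opnorm (p m))" by (rule cSUP_upper[OF UNIV_I bdd])
      also have "l2norm (P r) \<le> C * (\<epsilon> / (C + 1))"
        using PB[OF rl] mult_left_mono[OF rn C0] by linarith
      also have "C * (\<epsilon> / (C + 1)) \<le> \<epsilon>"
        using C0 ep by (simp add: field_simps)
      finally show "l2norm (P \<xi>) \<le> (SUP m. opnorm (p m)) + \<epsilon>" by simp
    qed
  qed
  show ?thesis using ge le unfolding P_def p_def by simp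
qed

definition emb :: "int \<Rightarrow> (nat \<Rightarrow> 'a \<Rightarrow> complex)" where
  "emb n = (\<lambda>_ _. of_int n)"

lemma inj_emb: "inj emb"
proof (rule injI)
  fix n m :: int assume "emb n = (emb m :: nat \<Rightarrow> 'a \<Rightarrow> complex)"
  then have "(of_int n :: complex) = of_int m" unfolding emb_def by (metis)
  then show "n = m" by simp
qed

definition ix :: "(nat \<Rightarrow> 'a \<Rightarrow> complex) \<Rightarrow> int" where
  "ix i = inv emb i"

lemma ix_emb[simp]: "ix (emb n) = n"
  unfolding ix_def by (rule inv_f_f[OF inj_emb])

lemma emb_ix: "i \<in> range emb \<Longrightarrow> emb (ix i) = i"
  unfolding ix_def by (rule f_inv_into_f)

definition sig :: "(nat \<Rightarrow> 'a \<Rightarrow> complex) \<Rightarrow> (nat \<Rightarrow> 'a \<Rightarrow> complex)" where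
  "sig i = (if i \<in> range emb then emb (ix i - 1) else i)"

lemma sig_emb[simp]: "sig (emb n) = emb (n - 1)"
  by (simp add: sig_def)

lemma sig_out: "i \<notin> range emb \<Longrightarrow> sig i = i"
  by (simp add: sig_def)

lemma bij_sig: "bij sig"
proof (rule bij_betw_byWitness[where f'="\<lambda>i. if i \<in> range emb then emb (ix i + 1) else i"])
  show "\<forall>a\<in>UNIV. (if sig a \<in> range emb then emb (ix (sig a) + 1) else sig a) = a"
    by (auto simp: sig_def emb_ix)
  show "\<forall>a'\<in>UNIV. sig (if a' \<in> range emb then emb (ix a' + 1) else a') = a'"
    by (auto simp: sig_def emb_ix)
qed auto

lemma sig_pow_emb: "(sig ^^ j) (emb n) = emb (n - int j)"
  by (induction j) (simp_all add: algebra_simps)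

lemma sig_pow_out: "i \<notin> range emb \<Longrightarrow> (sig ^^ j) i = i"
  by (induction j) (simp_all add: sig_out)

definition bfun :: "('a \<Rightarrow> 'a) \<Rightarrow> (nat \<Rightarrow> 'a) \<Rightarrow> ('a \<Rightarrow> complex) \<Rightarrow> (nat \<Rightarrow> 'a \<Rightarrow> complex) \<Rightarrow> complex" where
  "bfun \<phi> xt f i = (if i \<in> range emb then f (aseq \<phi> xt (ix i)) else 0)"

definition rho' :: "('a \<Rightarrow> 'a) \<Rightarrow> (nat \<Rightarrow> 'a) \<Rightarrow> ('a \<Rightarrow> complex) \<Rightarrow> ((nat \<Rightarrow> 'a \<Rightarrow> complex) \<Rightarrow> complex) \<Rightarrow> ((nat \<Rightarrow> 'a \<Rightarrow> complex) \<Rightarrow> complex)" where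
  "rho' \<phi> xt f \<eta> = (\<lambda>i. bfun \<phi> xt f i * \<eta> i)"

definition V' :: "((nat \<Rightarrow> 'a \<Rightarrow> complex) \<Rightarrow> complex) \<Rightarrow> ((nat \<Rightarrow> 'a \<Rightarrow> complex) \<Rightarrow> complex)" where
  "V' \<eta> = (\<lambda>i. \<eta> (sig i))"

definition ext :: "(int \<Rightarrow> complex) \<Rightarrow> ((nat \<Rightarrow> 'a \<Rightarrow> complex) \<Rightarrow> complex)" where
  "ext \<xi> = (\<lambda>i. if i \<in> range emb then \<xi> (ix i) else 0)"

lemma ext_l2: "ext \<xi> \<in> l2 \<longleftrightarrow> \<xi> \<in> l2" "l2norm (ext \<xi>) = l2norm \<xi>"
proof -
  have w: "\<And>n. ext \<xi> (emb n) = \<xi> n" by (simp add: ext_def)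
  have o: "\<And>i. i \<notin> range emb \<Longrightarrow> ext \<xi> i = 0" by (simp add: ext_def)
  show "ext \<xi> \<in> l2 \<longleftrightarrow> \<xi> \<in> l2" "l2norm (ext \<xi>) = l2norm \<xi>"
    using l2_ext[where e=emb and w="ext \<xi>" and z=\<xi>, OF inj_emb w o] by auto
qed

lemma mult_op_bounded:
  assumes "\<And>i. cmod (b i) \<le> B"
  shows "bounded_op (\<lambda>\<eta> i. b i * \<eta> i)"
  unfolding bounded_op_def
proof (intro conjI ballI allI)
  show "\<And>\<xi>. \<xi> \<in> l2 \<Longrightarrow> (\<lambda>i. b i * \<xi> i) \<in> l2" using l2_mult_bounded(1) assms by blast
  show "\<And>\<xi> \<eta>. (\<lambda>i. b i * (\<xi> i + \<eta> i)) = (\<lambda>i. b i * \<xi> i + b i * \<eta> i)" by (simp add: distrib_left)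
  show "\<And>c \<xi>. (\<lambda>i. b i * (c * \<xi> i)) = (\<lambda>i. c * (b i * \<xi> i))" by (simp add: algebra_simps)
  show "\<exists>C. \<forall>\<xi>\<in>l2. l2norm (\<lambda>i. b i * \<xi> i) \<le> C * l2norm \<xi>"
    using l2_mult_bounded(2) assms by blast
qed

lemma reindex_bounded:
  assumes "bij \<sigma>"
  shows "bounded_op (\<lambda>\<eta> i. \<eta> (\<sigma> i))"
  unfolding bounded_op_def
proof (intro conjI ballI allI)
  show "\<And>\<xi>. \<xi> \<in> l2 \<Longrightarrow> (\<lambda>i. \<xi> (\<sigma> i)) \<in> l2" using l2_reindex_bij(1)[OF assms] by blast
  show "\<exists>C. \<forall>\<xi>\<in>l2. l2norm (\<lambda>i. \<xi> (\<sigma> i)) \<le> C * l2norm \<xi>"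
    by (rule exI[of _ 1]) (simp add: l2_reindex_bij(2)[OF assms])
qed auto

lemma bfun_bound:
  assumes "compact (UNIV :: 'a::topological_space set)" "continuous_on UNIV (f :: 'a \<Rightarrow> complex)"
  shows "cmod (bfun \<phi> xt f i) \<le> snorm f"
  using snorm_ge[OF assms] snorm_nonneg[OF assms] by (simp add: bfun_def)

lemma cov_rep_emb:
  assumes cpt: "compact (UNIV :: 'a::topological_space set)" and xt: "xt \<in> Xt \<phi>"
  shows "cov_rep \<phi> (rho' \<phi> xt :: ('a \<Rightarrow> complex) \<Rightarrow> _) V'"
  unfolding cov_rep_def
proof (intro conjI)
  show "star_rep (rho' \<phi> xt :: ('a \<Rightarrow> complex) \<Rightarrow> _)"
    unfolding star_rep_def
  proof (intro conjI allI impI ballI)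
    fix f :: "'a \<Rightarrow> complex" assume cf: "continuous_on UNIV f"
    show "bounded_op (rho' \<phi> xt f)"
      unfolding rho'_def by (rule mult_op_bounded[OF bfun_bound[OF cpt cf]])
  next
    fix f g :: "'a \<Rightarrow> complex" and \<xi>
    show "rho' \<phi> xt (\<lambda>x. f x + g x) \<xi> = (\<lambda>i. rho' \<phi> xt f \<xi> i + rho' \<phi> xt g \<xi> i)"
      by (auto simp: rho'_def bfun_def distrib_right)
    show "rho' \<phi> xt (\<lambda>x. f x * g x) \<xi> = rho' \<phi> xt f (rho' \<phi> xt g \<xi>)"
      by (auto simp: rho'_def bfun_def)
  next
    fix c and f :: "'a \<Rightarrow> complex" and \<xi>
    show "rho' \<phi> xt (\<lambda>x. c * f x) \<xi> = (\<lambda>i. c * rho' \<phi> xt f \<xi> i)"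
      by (auto simp: rho'_def bfun_def)
  next
    fix f :: "'a \<Rightarrow> complex" and \<xi> \<eta>
    have "\<And>i. rho' \<phi> xt f \<xi> i * cnj (\<eta> i) = \<xi> i * cnj (rho' \<phi> xt (\<lambda>x. cnj (f x)) \<eta> i)"
      by (auto simp: rho'_def bfun_def)
    then show "l2inner (rho' \<phi> xt f \<xi>) \<eta> = l2inner \<xi> (rho' \<phi> xt (\<lambda>x. cnj (f x)) \<eta>)"
      unfolding l2inner_def by simp
  qed
  show "bounded_op V'" unfolding V'_def by (rule reindex_bounded[OF bij_sig])
  show "\<forall>\<xi>\<in>l2. l2norm (V' \<xi>) = l2norm \<xi>"
    unfolding V'_def using l2_reindex_bij(2)[OF bij_sig] by blast
  show "\<forall>f. continuous_on UNIV f \<longrightarrow> (\<forall>\<xi>\<in>l2. rho' \<phi> xt f (V' \<xi>) = V' (rho' \<phi> xt (f \<circ> \<phi>) \<xi>))"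
  proof (intro allI impI ballI ext)
    fix f :: "'a \<Rightarrow> complex" and \<xi> and i :: "nat \<Rightarrow> 'a \<Rightarrow> complex"
    show "rho' \<phi> xt f (V' \<xi>) i = V' (rho' \<phi> xt (f \<circ> \<phi>) \<xi>) i"
    proof (cases "i \<in> range emb")
      case True
      then obtain n where n: "i = emb n" by blast
      have "aseq \<phi> xt n = \<phi> (aseq \<phi> xt (n - 1))" using aseq_succ[OF xt, of "n - 1"] by simp
      then show ?thesis unfolding n by (simp add: rho'_def V'_def bfun_def)
    next
      case False
      then show ?thesis by (simp add: rho'_def V'_def bfun_def sig_out)
    qed
  qed
qed

lemma V'_pow: "(V' ^^ j) \<eta> = (\<lambda>i. \<eta> ((sig ^^ j) i))"
  by (induction j) (simp_all add: V'_def funpow_swap1)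

lemma rep_ext:
  "rep (rho' \<phi> xt) V' D (ext \<xi>) = ext (Pi_x \<phi> xt (tilde D) \<xi>)"
proof
  fix i :: "nat \<Rightarrow> 'a \<Rightarrow> complex"
  show "rep (rho' \<phi> xt) V' D (ext \<xi>) i = ext (Pi_x \<phi> xt (tilde D) \<xi>) i"
  proof (cases "i \<in> range emb")
    case True
    then obtain n where n: "i = emb n" by blast
    show ?thesis unfolding n rep_def V'_pow sig_pow_emb
      by (simp add: rho'_def bfun_def ext_def Pi_formula)
  next
    case False
    then show ?thesis unfolding rep_def V'_pow sig_pow_out[OF False]
      by (simp add: rho'_def bfun_def ext_def)
  qed
qed

lemma Pi_le_univ:
  assumes cpt: "compact (UNIV :: 'a::topological_space set)" and D: "D \<in> poly_elems" and xt: "xt \<in> Xt \<phi>"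
  shows "opnorm (Pi_x \<phi> xt (tilde (D :: nat \<Rightarrow> 'a \<Rightarrow> complex))) \<le> univ_norm \<phi> D"
proof -
  note cr = cov_rep_emb[OF cpt xt]
  have RU: "\<And>\<eta>. \<eta> \<in> l2 \<Longrightarrow> l2norm \<eta> \<le> 1 \<Longrightarrow> l2norm (rep (rho' \<phi> xt) V' D \<eta>) \<le> nb D"
    using lin_bound_unit[OF _ nb_nonneg[OF cpt D]] cov_rep_bound[OF cpt cr D] by blast
  have "opnorm (Pi_x \<phi> xt (tilde D)) \<le> opnorm (rep (rho' \<phi> xt :: ('a \<Rightarrow> complex) \<Rightarrow> _) V' D)"
  proof (rule opnorm_le)
    fix \<xi> :: "int \<Rightarrow> complex" assume x: "\<xi> \<in> l2" "l2norm \<xi> \<le> 1"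
    have "l2norm (Pi_x \<phi> xt (tilde D) \<xi>) = l2norm (rep (rho' \<phi> xt :: ('a \<Rightarrow> complex) \<Rightarrow> _) V' D (ext \<xi>))"
      unfolding rep_ext ext_l2 ..
    also have "\<dots> \<le> opnorm (rep (rho' \<phi> xt :: ('a \<Rightarrow> complex) \<Rightarrow> _) V' D)"
    proof (rule opnorm_ge[OF RU])
      have e: "(ext \<xi> :: (nat \<Rightarrow> 'a \<Rightarrow> complex) \<Rightarrow> complex) \<in> l2" "l2norm (ext \<xi> :: (nat \<Rightarrow> 'a \<Rightarrow> complex) \<Rightarrow> complex) = l2norm \<xi>"
        using x by (simp_all add: ext_l2)
      then show "(ext \<xi> :: (nat \<Rightarrow> 'a \<Rightarrow> complex) \<Rightarrow> complex) \<in> l2" "l2norm (ext \<xi> :: (nat \<Rightarrow> 'a \<Rightarrow> complex) \<Rightarrow> complex) \<le> 1" using x by auto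
    qed
    finally show "l2norm (Pi_x \<phi> xt (tilde D) \<xi>) \<le> opnorm (rep (rho' \<phi> xt :: ('a \<Rightarrow> complex) \<Rightarrow> _) V' D)" .
  qed
  also have "\<dots> \<le> univ_norm \<phi> D" by (rule univ_ge[OF cpt cr D])
  finally show ?thesis .
qed

lemma opnorm_tri:
  fixes A B D :: "('i \<Rightarrow> complex) \<Rightarrow> ('i \<Rightarrow> complex)"
  assumes B: "\<And>\<xi>. \<xi> \<in> l2 \<Longrightarrow> B \<xi> \<in> l2 \<and> l2norm (B \<xi>) \<le> c1 * l2norm \<xi>" "0 \<le> c1"
    and D: "\<And>\<xi>. \<xi> \<in> l2 \<Longrightarrow> D \<xi> \<in> l2 \<and> l2norm (D \<xi>) \<le> c2 * l2norm \<xi>" "0 \<le> c2"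
    and A: "\<And>\<xi>. \<xi> \<in> l2 \<Longrightarrow> A \<xi> = (\<lambda>i. B \<xi> i + D \<xi> i)"
  shows "opnorm A \<le> opnorm B + opnorm D"
proof (rule opnorm_le)
  fix \<xi> :: "'i \<Rightarrow> complex" assume x: "\<xi> \<in> l2" "l2norm \<xi> \<le> 1"
  have BU: "\<And>\<xi>. \<xi> \<in> l2 \<Longrightarrow> l2norm \<xi> \<le> 1 \<Longrightarrow> l2norm (B \<xi>) \<le> c1"
    using lin_bound_unit[OF _ B(2)] B(1) by blast
  have DU: "\<And>\<xi>. \<xi> \<in> l2 \<Longrightarrow> l2norm \<xi> \<le> 1 \<Longrightarrow> l2norm (D \<xi>) \<le> c2"
    using lin_bound_unit[OF _ D(2)] D(1) by blast
  have "l2norm (A \<xi>) \<le> l2norm (B \<xi>) + l2norm (D \<xi>)"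
    unfolding A[OF x(1)] using l2_add(2) B(1)[OF x(1)] D(1)[OF x(1)] by blast
  also have "\<dots> \<le> opnorm B + opnorm D"
    using opnorm_ge[of B c1, OF BU x] opnorm_ge[of D c2, OF DU x] by linarith
  finally show "l2norm (A \<xi>) \<le> opnorm B + opnorm D" .
qed

lemma pi_y_ext:
  assumes "finite T" "supp G \<subseteq> T"
  shows "pi_y \<phi> y G z k = (\<Sum>j\<in>T. if j \<le> k then G j ((\<phi> ^^ (k - j)) y) * z (k - j) else 0)"
  unfolding pi_y_formula
  by (rule sum.mono_neutral_left[OF assms]) auto

lemma diff_poly:
  assumes "F1 \<in> poly_elems" "F2 \<in> poly_elems"
  shows "(\<lambda>j x. F1 j x - F2 j x) \<in> poly_elems"
proof -
  have "supp (\<lambda>j x. F1 j x - F2 j x) \<subseteq> supp F1 \<union> supp F2" by auto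
  then have "finite (supp (\<lambda>j x. F1 j x - F2 j x))"
    using assms by (auto simp: poly_elems_def intro: finite_subset)
  moreover have "\<forall>n. continuous_on UNIV (\<lambda>x. F1 n x - F2 n x)"
    using assms by (auto simp: poly_elems_def intro!: continuous_intros)
  ultimately show ?thesis by (simp add: poly_elems_def)
qed

lemma pi_lin:
  assumes "F1 \<in> poly_elems" "F2 \<in> poly_elems"
  shows "pi_y \<phi> y F1 z = (\<lambda>k. pi_y \<phi> y F2 z k + pi_y \<phi> y (\<lambda>j x. F1 j x - F2 j x) z k)"
proof
  fix k
  define T where "T = supp F1 \<union> supp F2"
  have fT: "finite T" using assms by (simp add: T_def poly_elems_def)
  have s1: "supp F1 \<subseteq> T" "supp F2 \<subseteq> T" "supp (\<lambda>j x. F1 j x - F2 j x) \<subseteq> T" by (auto simp: T_def)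
  show "pi_y \<phi> y F1 z k = pi_y \<phi> y F2 z k + pi_y \<phi> y (\<lambda>j x. F1 j x - F2 j x) z k"
    unfolding pi_y_ext[OF fT s1(1)] pi_y_ext[OF fT s1(2)] pi_y_ext[OF fT s1(3)] sum.distrib[symmetric]
    by (rule sum.cong) (auto simp: algebra_simps)
qed

lemma p_le_Pi:
  assumes cpt: "compact (UNIV :: 'a::topological_space set)" and G: "G \<in> poly_elems" and xt: "xt \<in> Xt \<phi>"
  shows "opnorm (pi_y \<phi> (aseq \<phi> xt m) (G :: nat \<Rightarrow> 'a \<Rightarrow> complex)) \<le> opnorm (Pi_x \<phi> xt (tilde G))"
proof -
  have b: "opnorm (pi_y \<phi> (aseq \<phi> xt m') G) \<le> nb G" for m'
  proof (rule opnorm_le)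
    fix z :: "nat \<Rightarrow> complex" assume "z \<in> l2" "l2norm z \<le> 1"
    then show "l2norm (pi_y \<phi> (aseq \<phi> xt m') G z) \<le> nb G"
      using lin_bound_unit[OF _ nb_nonneg[OF cpt G]] pi_bound[OF cpt G _ xt] by blast
  qed
  have "bdd_above (range (\<lambda>m. opnorm (pi_y \<phi> (aseq \<phi> xt m) G)))"
    by (rule bdd_aboveI[of _ "nb G"]) (use b in auto)
  then show ?thesis unfolding main_identity[OF cpt G xt] by (rule cSUP_upper[OF UNIV_I])
qed

theorem corollary4:
  fixes \<phi> :: "'a::t2_space \<Rightarrow> 'a"
    and F :: "nat \<Rightarrow> nat \<Rightarrow> 'a \<Rightarrow> complex"
    and xt :: "nat \<Rightarrow> 'a"
  assumes "compact (UNIV :: 'a set)"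
    and "continuous_on UNIV \<phi>"
    and "surj \<phi>"
    and "\<forall>k. F k \<in> poly_elems"
    and "\<forall>e>0. \<exists>N. \<forall>m\<ge>N. \<forall>n\<ge>N. univ_norm \<phi> (\<lambda>j x. F m j x - F n j x) < e"
    and "xt \<in> Xt \<phi>"
  shows "(\<lambda>k. opnorm (Pi_x \<phi> xt (tilde (F k))))
           \<longlonglongrightarrow> (SUP y \<in> pext ` orbit \<phi> xt. lim (\<lambda>k. opnorm (pi_y \<phi> y (F k))))"
proof -
  note cpt = assms(1)
  note xt = assms(6)
  have Fp: "\<And>k. F k \<in> poly_elems" using assms(4) by blast
  define h where "h = (\<lambda>k m. opnorm (pi_y \<phi> (aseq \<phi> xt m) (F k)))"
  define u where "u = (\<lambda>k l. univ_norm \<phi> (\<lambda>j x. F k j x - F l j x))"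
  have cau: "\<And>e. e > 0 \<Longrightarrow> \<exists>N. \<forall>k\<ge>N. \<forall>l\<ge>N. u k l < e" using assms(5) unfolding u_def by blast
  have hdiff: "h k m \<le> h l m + u k l" for k l m
  proof -
    define D where "D = (\<lambda>j x. F k j x - F l j x)"
    have Dp: "D \<in> poly_elems" unfolding D_def by (rule diff_poly[OF Fp Fp])
    have "h k m \<le> h l m + opnorm (pi_y \<phi> (aseq \<phi> xt m) D)"
      unfolding h_def
    proof (rule opnorm_tri)
      show "\<And>z. z \<in> l2 \<Longrightarrow> pi_y \<phi> (aseq \<phi> xt m) (F l) z \<in> l2 \<and> l2norm (pi_y \<phi> (aseq \<phi> xt m) (F l) z) \<le> nb (F l) * l2norm z"
        using pi_bound[OF cpt Fp _ xt] by blast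
      show "0 \<le> nb (F l)" by (rule nb_nonneg[OF cpt Fp])
      show "\<And>z. z \<in> l2 \<Longrightarrow> pi_y \<phi> (aseq \<phi> xt m) D z \<in> l2 \<and> l2norm (pi_y \<phi> (aseq \<phi> xt m) D z) \<le> nb D * l2norm z"
        using pi_bound[OF cpt Dp _ xt] by blast
      show "0 \<le> nb D" by (rule nb_nonneg[OF cpt Dp])
      show "\<And>z. z \<in> l2 \<Longrightarrow> pi_y \<phi> (aseq \<phi> xt m) (F k) z = (\<lambda>i. pi_y \<phi> (aseq \<phi> xt m) (F l) z i + pi_y \<phi> (aseq \<phi> xt m) D z i)"
        unfolding D_def by (rule pi_lin[OF Fp Fp])
    qed
    also have "opnorm (pi_y \<phi> (aseq \<phi> xt m) D) \<le> opnorm (Pi_x \<phi> xt (tilde D))"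
      by (rule p_le_Pi[OF cpt Dp xt])
    also have "\<dots> \<le> u k l" unfolding u_def D_def[symmetric] by (rule Pi_le_univ[OF cpt Dp xt])
    finally show ?thesis by simp
  qed
  have hb: "h k m \<le> nb (F k)" for k m
    unfolding h_def
  proof (rule opnorm_le)
    fix z :: "nat \<Rightarrow> complex" assume "z \<in> l2" "l2norm z \<le> 1"
    then show "l2norm (pi_y \<phi> (aseq \<phi> xt m) (F k) z) \<le> nb (F k)"
      using lin_bound_unit[OF _ nb_nonneg[OF cpt Fp]] pi_bound[OF cpt Fp _ xt] by blast
  qed
  define H where "H = (\<lambda>m. lim (\<lambda>k. h k m))"
  have conv: "(\<lambda>k. h k m) \<longlonglongrightarrow> H m" for m
  proof -
    have "Cauchy (\<lambda>k. h k m)"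
    proof (rule CauchyI)
      fix e :: real assume "0 < e"
      then obtain N where N: "\<forall>k\<ge>N. \<forall>l\<ge>N. u k l < e" using cau by blast
      show "\<exists>M. \<forall>k\<ge>M. \<forall>l\<ge>M. norm (h k m - h l m) < e"
      proof (intro exI allI impI)
        fix k l assume "N \<le> k" "N \<le> l"
        then have "u k l < e" "u l k < e" using N by auto
        then show "norm (h k m - h l m) < e" using hdiff[of k m l] hdiff[of l m k] by simp
      qed
    qed
    then show ?thesis unfolding H_def using Cauchy_convergent_iff convergent_LIMSEQ_iff by blast
  qed
  have unif: "\<exists>N. \<forall>k\<ge>N. \<forall>m. \<bar>h k m - H m\<bar> \<le> e" if ep: "e > 0" for e
  proof -
    obtain N where N: "\<forall>k\<ge>N. \<forall>l\<ge>N. u k l < e" using cau[OF ep] by blast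
    have "\<bar>h k m - H m\<bar> \<le> e" if "N \<le> k" for k m
    proof (rule LIMSEQ_le_const2)
      show "(\<lambda>l. \<bar>h k m - h l m\<bar>) \<longlonglongrightarrow> \<bar>h k m - H m\<bar>"
        by (intro tendsto_intros conv)
      show "\<exists>M. \<forall>l\<ge>M. \<bar>h k m - h l m\<bar> \<le> e"
      proof (intro exI allI impI)
        fix l assume "N \<le> l"
        then have "u k l < e" "u l k < e" using N \<open>N \<le> k\<close> by auto
        then show "\<bar>h k m - h l m\<bar> \<le> e" using hdiff[of k m l] hdiff[of l m k] by simp
      qed
    qed
    then show ?thesis by blast
  qed
  have bddh: "bdd_above (range (h k))" for k by (rule bdd_aboveI[of _ "nb (F k)"]) (use hb in auto)
  obtain N1 where N1: "\<forall>k\<ge>N1. \<forall>m. \<bar>h k m - H m\<bar> \<le> 1" using unif[of 1] by auto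
  have bddH: "bdd_above (range H)"
  proof (rule bdd_aboveI[of _ "nb (F N1) + 1"])
    fix x assume "x \<in> range H"
    then obtain m where "x = H m" by blast
    moreover have "\<bar>h N1 m - H m\<bar> \<le> 1" using N1 by blast
    ultimately show "x \<le> nb (F N1) + 1" using hb[of N1 m] by linarith
  qed
  have lim: "(\<lambda>k. SUP m. h k m) \<longlonglongrightarrow> (SUP m. H m)"
  proof (rule LIMSEQ_I)
    fix r :: real assume r: "0 < r"
    obtain N where N: "\<forall>k\<ge>N. \<forall>m. \<bar>h k m - H m\<bar> \<le> r / 2" using unif[of "r/2"] r by auto
    show "\<exists>no. \<forall>k\<ge>no. norm ((SUP m. h k m) - (SUP m. H m)) < r"
    proof (intro exI allI impI)
      fix k assume k: "N \<le> k"
      have a: "(SUP m. h k m) \<le> (SUP m. H m) + r / 2"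
      proof (rule cSUP_least)
        fix m
        have "\<bar>h k m - H m\<bar> \<le> r / 2" using N k by blast
        then have "h k m \<le> H m + r / 2" by linarith
        also have "H m \<le> (SUP m. H m)" by (rule cSUP_upper[OF UNIV_I bddH])
        finally show "h k m \<le> (SUP m. H m) + r / 2" by simp
      qed simp
      have b: "(SUP m. H m) \<le> (SUP m. h k m) + r / 2"
      proof (rule cSUP_least)
        fix m
        have "\<bar>h k m - H m\<bar> \<le> r / 2" using N k by blast
        then have "H m \<le> h k m + r / 2" by linarith
        also have "h k m \<le> (SUP m. h k m)" by (rule cSUP_upper[OF UNIV_I bddh])
        finally show "H m \<le> (SUP m. h k m) + r / 2" by simp
      qed simp
      show "norm ((SUP m. h k m) - (SUP m. H m)) < r" using a b r by simp
    qed
  qed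
  have eq1: "(\<lambda>k. opnorm (Pi_x \<phi> xt (tilde (F k)))) = (\<lambda>k. SUP m. h k m)"
    unfolding h_def using main_identity[OF cpt Fp xt] by simp
  have eq2: "(SUP y \<in> pext ` orbit \<phi> xt. lim (\<lambda>k. opnorm (pi_y \<phi> y (F k)))) = (SUP m. H m)"
    unfolding orbit_image H_def h_def by (simp add: image_image)
  show ?thesis unfolding eq1 eq2 by (rule lim)
qed

end
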